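(* Given any integers $W\ge6$, $L\ge2$ and any $\theta_i\in\{0,1\}$ for $i=0,1,\dots,W^2L^2-1$, there exists a ReLU network $\phi:\mathbb{R}\to\mathbb{R}$, $\phi\in\mathcal{NN}(8W+4,4L)$, such that $\phi(i)=\theta_i$ for $i=0,1,\dots,W^2L^2-1$ and $\mathrm{Lip}\,\phi\le2\cdot2^{L^2}+L^2$.
   Context: $\sigma(x)=\max(x,0)$. $\mathcal{NN}(W,L)$: functions $\phi(x)=T_L(\sigma(T_{L-1}(\cdots\sigma(T_0(x))\cdots)))$ with affine maps $T_l$, ReLU componentwise, all hidden layer sizes $\le W$ and depth $\le L$. $\mathrm{Lip}\,\phi$ is the Lipschitz constant of $\phi$. *)

theory Defs
  imports "HOL-Analysis.Analysis"
begin

text \<open>Vectors in R^d are represented as functions nat => real, only the first d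
  coordinates being relevant.\<close>

definition aff_map :: "(nat \<Rightarrow> nat \<Rightarrow> real) \<Rightarrow> (nat \<Rightarrow> real) \<Rightarrow> nat \<Rightarrow> nat
    \<Rightarrow> (nat \<Rightarrow> real) \<Rightarrow> (nat \<Rightarrow> real)" where
  "aff_map A b m n x = (\<lambda>i. if i < n then (\<Sum>j<m. A i j * x j) + b i else 0)"

definition relu :: "real \<Rightarrow> real" where
  "relu x = max x 0"

definition relu_vec :: "(nat \<Rightarrow> real) \<Rightarrow> (nat \<Rightarrow> real)" where
  "relu_vec x = (\<lambda>i. relu (x i))"

text \<open>Evaluation of T_k o sigma o ... o sigma o T_0, layers = [(A_0,b_0),...,(A_k,b_k)],
  ds = [d_0, d_1, ..., d_{k+1}] the layer widths (T_l : R^{d_l} -> R^{d_{l+1}}).\<close>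

fun net_eval :: "((nat \<Rightarrow> nat \<Rightarrow> real) \<times> (nat \<Rightarrow> real)) list \<Rightarrow> nat list
    \<Rightarrow> (nat \<Rightarrow> real) \<Rightarrow> (nat \<Rightarrow> real)" where
  "net_eval [] ds x = x"
| "net_eval [(A, b)] ds x = aff_map A b (ds ! 0) (ds ! 1) x"
| "net_eval ((A, b) # l # ls) ds x =
     net_eval (l # ls) (tl ds) (relu_vec (aff_map A b (ds ! 0) (ds ! 1) x))"

text \<open>NN(W,L): scalar ReLU networks R -> R with at most L hidden layers
  (i.e. at most L+1 affine maps T_0..T_L), each hidden layer of width at most W.\<close>

definition NN :: "nat \<Rightarrow> nat \<Rightarrow> (real \<Rightarrow> real) set" where
  "NN W L = {\<phi>. \<exists>layers ds.
      layers \<noteq> [] \<and> length layers \<le> L + 1 \<and>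
      length ds = length layers + 1 \<and> hd ds = 1 \<and> last ds = 1 \<and>
      (\<forall>i. 0 < i \<and> i < length layers \<longrightarrow> ds ! i \<le> W) \<and>
      (\<forall>x. \<phi> x = net_eval layers ds (\<lambda>_. x) 0)}"

end

theory Submission
  imports Defs
begin

lemma net_eval_snoc:
  "layers \<noteq> [] \<Longrightarrow> length ds = length layers + 1 \<Longrightarrow>
   net_eval (layers @ [(A,b)]) (ds @ [d]) x = aff_map A b (last ds) d (relu_vec (net_eval layers ds x))"
proof (induction layers arbitrary: ds x)
  case Nil then show ?case by simp
next
  case (Cons l ls)
  obtain C c where l: "l = (C, c)" by (cases l)
  show ?case
  proof (cases ls)
    case Nil
    with Cons.prems obtain d0 d1 where ds: "ds = [d0, d1]"
      by (cases ds; cases "tl ds"; auto)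
    show ?thesis using Nil ds l by simp
  next
    case (Cons l2 ls2)
    from Cons.prems obtain d0 ds' where ds: "ds = d0 # ds'" by (cases ds) auto
    have "net_eval (ls @ [(A, b)]) (ds' @ [d]) y = aff_map A b (last ds') d (relu_vec (net_eval ls ds' y))" for y
      using Cons.IH[of ds' y] Cons.prems ds \<open>ls = l2 # ls2\<close> by simp
    moreover have "ds' \<noteq> []" using Cons.prems ds \<open>ls = l2 # ls2\<close> by auto
    ultimately show ?thesis using l ds \<open>ls = l2 # ls2\<close> by (simp add: nth_append)
  qed
qed

definition hid :: "nat \<Rightarrow> nat \<Rightarrow> nat \<Rightarrow> (real \<Rightarrow> nat \<Rightarrow> real) \<Rightarrow> bool" where
 "hid Wd k d H \<longleftrightarrow> (\<exists>layers ds. layers \<noteq> [] \<and> length layers = k \<and> length ds = k + 1 \<and> hd ds = 1 \<and> last ds = d \<and>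
     (\<forall>i. 0 < i \<and> i \<le> k \<longrightarrow> ds ! i \<le> Wd) \<and> (\<forall>x. H x = relu_vec (net_eval layers ds (\<lambda>_. x))))"

lemma hid_first:
  assumes "d \<le> Wd" "\<And>x. H x = relu_vec (aff_map A b 1 d (\<lambda>_. x))"
  shows "hid Wd 1 d H"
  unfolding hid_def
  apply (rule exI[of _ "[(A,b)]"], rule exI[of _ "[1,d]"])
  using assms by (auto simp: nth_Cons split: nat.splits)

lemma hid_step:
  assumes "hid Wd k d H" "d' \<le> Wd" "\<And>x. H' x = relu_vec (aff_map A b d d' (H x))"
  shows "hid Wd (Suc k) d' H'"
proof -
  obtain layers ds where h: "layers \<noteq> []" "length layers = k" "length ds = k + 1" "hd ds = 1" "last ds = d"
    "\<forall>i. 0 < i \<and> i \<le> k \<longrightarrow> ds ! i \<le> Wd" "\<forall>x. H x = relu_vec (net_eval layers ds (\<lambda>_. x))"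
    using assms(1) unfolding hid_def by blast
  show ?thesis unfolding hid_def
  proof (intro exI conjI allI impI)
    show "layers @ [(A,b)] \<noteq> []" by simp
    show "length (layers @ [(A,b)]) = Suc k" using h by simp
    show "length (ds @ [d']) = Suc k + 1" using h by simp
    show "hd (ds @ [d']) = 1" using h by (cases ds) auto
    show "last (ds @ [d']) = d'" by simp
    fix i assume "0 < i \<and> i \<le> Suc k"
    then show "(ds @ [d']) ! i \<le> Wd" using h assms(2)
      by (cases "i < k + 1") (auto simp: nth_append)
  next
    fix x
    show "H' x = relu_vec (net_eval (layers @ [(A, b)]) (ds @ [d']) (\<lambda>_. x))"
      using h assms(3) net_eval_snoc[of layers ds A b d' "\<lambda>_. x"] by simp
  qed
qed

lemma hid_out:
  assumes "hid Wd k d H" "k \<le> Lm" "\<And>x. f x = aff_map A b d 1 (H x) 0"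
  shows "f \<in> NN Wd Lm"
proof -
  obtain layers ds where h: "layers \<noteq> []" "length layers = k" "length ds = k + 1" "hd ds = 1" "last ds = d"
    "\<forall>i. 0 < i \<and> i \<le> k \<longrightarrow> ds ! i \<le> Wd" "\<forall>x. H x = relu_vec (net_eval layers ds (\<lambda>_. x))"
    using assms(1) unfolding hid_def by blast
  show ?thesis unfolding NN_def
  proof (intro CollectI exI conjI allI impI)
    show "layers @ [(A,b)] \<noteq> []" by simp
    show "length (layers @ [(A,b)]) \<le> Lm + 1" using h assms by simp
    show "length (ds @ [1]) = length (layers @ [(A,b)]) + 1" using h by simp
    show "hd (ds @ [1]) = 1" using h by (cases ds) auto
    show "last (ds @ [1]) = 1" by simp
    fix i assume "0 < i \<and> i < length (layers @ [(A, b)])"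
    then show "(ds @ [1]) ! i \<le> Wd" using h by (auto simp: nth_append)
  next
    fix x
    show "f x = net_eval (layers @ [(A, b)]) (ds @ [1]) (\<lambda>_. x) 0"
      using h assms(3) net_eval_snoc[of layers ds A b 1 "\<lambda>_. x"] by simp
  qed
qed

definition ev :: "nat \<Rightarrow> (nat \<Rightarrow> real) \<Rightarrow> (nat \<Rightarrow> real) \<Rightarrow> real" where
  "ev d r h = (\<Sum>j<d. r j * h j)"

definition pt :: "nat \<Rightarrow> real \<Rightarrow> nat \<Rightarrow> real" where "pt p c j = (if j = p then c else 0)"
definition rg :: "nat \<Rightarrow> nat \<Rightarrow> (nat \<Rightarrow> real) \<Rightarrow> nat \<Rightarrow> real" where
  "rg q n f j = (if q \<le> j \<and> j < q + n then f (j - q) else 0)"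

lemma ev_add: "ev d (\<lambda>j. F j + G j) h = ev d F h + ev d G h"
  by (simp add: ev_def distrib_right sum.distrib)
lemma ev_neg: "ev d (\<lambda>j. - F j) h = - ev d F h"
  by (simp add: ev_def sum_negf)
lemma ev_scale: "ev d (\<lambda>j. c * F j) h = c * ev d F h"
  by (simp add: ev_def sum_distrib_left mult.assoc)
lemma ev_zero: "ev d (\<lambda>j. 0) h = 0"
  by (simp add: ev_def)
lemma ev_pt: "ev d (pt p c) h = c * h p" if "p < d"
proof -
  have "ev d (pt p c) h = (\<Sum>j<d. if j = p then c * h j else 0)"
    unfolding ev_def pt_def by (rule sum.cong) auto
  then show ?thesis using that by (simp add: sum.delta)
qed
lemma ev_rg: assumes "q + n \<le> d" shows "ev d (rg q n f) h = (\<Sum>u<n. f u * h (q + u))"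
proof -
  have "ev d (rg q n f) h = (\<Sum>j\<in>{q..<q+n}. f (j - q) * h j)"
    unfolding ev_def rg_def using assms
    by (intro sum.mono_neutral_cong_right) auto
  also have "\<dots> = (\<Sum>u<n. f u * h (q + u))"
    by (rule sum.reindex_bij_witness[of _ "\<lambda>u. u + q" "\<lambda>j. j - q"]) auto
  finally show ?thesis .
qed
lemma ev_one: "ev (Suc 0) r h = r 0 * h 0"
  by (simp add: ev_def)

lemma aff_map_ev: "aff_map A b m n h i = (if i < n then ev m (A i) h + b i else 0)"
  by (simp add: aff_map_def ev_def)

definition rmp :: "real \<Rightarrow> real" where "rmp u = relu (u + 1) - relu u"
definition clp :: "real \<Rightarrow> real \<Rightarrow> real" where "clp c u = relu u - relu (u - c)"
definition sg :: "nat \<Rightarrow> real" where "sg j = (-1) ^ j"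
definition snk :: "nat \<Rightarrow> nat \<Rightarrow> real \<Rightarrow> real" where
  "snk K C u = (\<Sum>j<C. sg j * clp (real K - 1) (u - real (j * K)))"
definition stw :: "nat \<Rightarrow> nat \<Rightarrow> (nat \<Rightarrow> real) \<Rightarrow> real \<Rightarrow> real" where
  "stw K C c u = (\<Sum>j<C. c j * rmp (u - real ((j+1) * K)))"

lemma relu_alt: "relu u = max u 0" by (simp add: relu_def)

lemma rmp_0: "u \<le> -1 \<Longrightarrow> rmp u = 0" by (simp add: rmp_def relu_def)
lemma rmp_1: "u \<ge> 0 \<Longrightarrow> rmp u = 1" by (simp add: rmp_def relu_def)
lemma rmp_mid: "-1 \<le> u \<Longrightarrow> u \<le> 0 \<Longrightarrow> rmp u = u + 1" by (simp add: rmp_def relu_def)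
lemma clp_0: "u \<le> 0 \<Longrightarrow> c \<ge> 0 \<Longrightarrow> clp c u = 0" by (simp add: clp_def relu_def)
lemma clp_c: "u \<ge> c \<Longrightarrow> c \<ge> 0 \<Longrightarrow> clp c u = c" by (simp add: clp_def relu_def)
lemma clp_mid: "0 \<le> u \<Longrightarrow> u \<le> c \<Longrightarrow> clp c u = u" by (simp add: clp_def relu_def)

lemma sg_sum: "(\<Sum>j<a. sg j) = (if even a then 0 else 1)"
  by (induction a) (auto simp: sg_def)

lemma sum_three:
  fixes a C :: nat
  assumes "a < C" "\<And>j. a < j \<Longrightarrow> j < C \<Longrightarrow> f j = 0"
  shows "(\<Sum>j<C. f j) = (\<Sum>j<a. f j) + f a"
proof -
  have "{..<C} = {..<Suc a} \<union> {Suc a..<C}" using assms(1) by auto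
  then have "(\<Sum>j<C. f j) = (\<Sum>j<Suc a. f j) + (\<Sum>j\<in>{Suc a..<C}. f j)"
    by (metis (no_types, lifting) finite_atLeastLessThan finite_lessThan ivl_disj_int_one(2) sum.union_disjoint lessThan_atLeast0)
  also have "(\<Sum>j\<in>{Suc a..<C}. f j) = 0" using assms(2) by (intro sum.neutral) auto
  finally show ?thesis by simp
qed

lemma snk_terms:
  fixes K C a r :: nat and u :: real
  assumes K: "1 \<le> K" and r: "r < K" and aC: "a < C"
    and u: "real (a*K+r) \<le> u" "u \<le> real (a*K+r) + 1"
  shows "snk K C u = (if even a then 0 else real K - 1) + sg a * clp (real K - 1) (u - real (a*K))"
proof -
  have Kr: "real K \<ge> 1" using K by simp
  let ?f = "\<lambda>j. sg j * clp (real K - 1) (u - real (j * K))"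
  have z: "?f j = 0" if "a < j" "j < C" for j
  proof -
    have "(a+1)*K \<le> j*K" using that by (intro mult_le_mono1) auto
    then have "real ((a+1)*K) \<le> real (j*K)" by (simp only: of_nat_le_iff)
    then have "u - real (j*K) \<le> 0" using u r by (simp add: algebra_simps)
    then show ?thesis using Kr by (simp add: clp_0)
  qed
  have lo: "?f j = sg j * (real K - 1)" if "j < a" for j
  proof -
    have "(j+1)*K \<le> a*K" using that by (intro mult_le_mono1) auto
    then have "real ((j+1)*K) \<le> real (a*K)" by (simp only: of_nat_le_iff)
    then have "u - real (j*K) \<ge> real K - 1" using u by (simp add: algebra_simps)
    then show ?thesis using Kr by (simp add: clp_c)
  qed
  have "snk K C u = (\<Sum>j<a. ?f j) + ?f a" unfolding snk_def by (rule sum_three[OF aC z])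
  also have "(\<Sum>j<a. ?f j) = (\<Sum>j<a. sg j * (real K - 1))"
    by (rule sum.cong[OF refl], rule lo, simp)
  also have "\<dots> = (\<Sum>j<a. sg j) * (real K - 1)"
    by (simp add: sum_distrib_right)
  finally show ?thesis by (simp add: sg_sum)
qed

lemma snk_int:
  fixes K C w :: nat
  assumes K: "1 \<le> K" and w: "w < K * C"
  shows "snk K C (real w) = (if even (w div K) then real (w mod K) else real K - 1 - real (w mod K))"
proof -
  define a r where "a = w div K" "r = w mod K"
  have wr: "w = a*K + r" using a_r_def by simp
  have r: "r < K" using K a_r_def by simp
  have aC: "a < C" using w K a_r_def by (simp add: div_less_iff_less_mult mult.commute)
  have c: "clp (real K - 1) (real w - real (a*K)) = real r"
    using r by (subst clp_mid) (auto simp: wr)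
  show ?thesis
    using snk_terms[OF K r aC, of "real w"] c by (auto simp: wr[symmetric] a_r_def sg_def)
qed

lemma snk_int_interval:
  fixes K C a r :: nat and u :: real
  assumes K: "1 \<le> K" and r: "r < K" and aC: "a < C"
    and u: "real (a*K+r) \<le> u" "u \<le> real (a*K+r) + 1"
  shows "snk K C u = snk K C (real (a*K+r)) + (if r = K - 1 then 0 else sg a * (u - real (a*K+r)))"
proof -
  have Kr: "real K \<ge> 1" using K by simp
  have e1: "snk K C u = (if even a then 0 else real K - 1) + sg a * clp (real K - 1) (u - real (a*K))"
    by (rule snk_terms[OF K r aC u])
  have e2: "snk K C (real (a*K+r)) = (if even a then 0 else real K - 1) + sg a * clp (real K - 1) (real (a*K+r) - real (a*K))"
    by (rule snk_terms[OF K r aC]) auto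
  show ?thesis
  proof (cases "r = K - 1")
    case True
    then have "clp (real K - 1) (u - real (a*K)) = real K - 1" "clp (real K - 1) (real (a*K+r) - real (a*K)) = real K - 1"
      using u Kr K by (auto intro!: clp_c simp: of_nat_diff)
    then show ?thesis using e1 e2 True by simp
  next
    case False
    then have "r + 1 \<le> K - 1" using r by simp
    then have rr: "real r + 1 \<le> real K - 1" using K by linarith
    have "clp (real K - 1) (u - real (a*K)) = u - real (a*K)"
      using u rr by (intro clp_mid) auto
    moreover have "clp (real K - 1) (real (a*K+r) - real (a*K)) = real r"
    proof -
      have "real (a*K+r) - real (a*K) = real r" by simp
      then show ?thesis using rr by (simp add: clp_mid)
    qed
    ultimately have X: "clp (real K - 1) (u - real (a*K)) = real r + (u - real (a*K+r))"
      and B: "clp (real K - 1) (real (a*K+r) - real (a*K)) = real r" by auto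
    show ?thesis unfolding e1 e2 X B using False by (simp add: algebra_simps)
  qed
qed

lemma stw_terms:
  fixes K C a r :: nat and u :: real
  assumes K: "1 \<le> K" and r: "r < K" and aC: "a < C"
    and u: "real (a*K+r) \<le> u" "u \<le> real (a*K+r) + 1"
  shows "stw K C c u = (\<Sum>j<a. c j) + (if r = K - 1 then c a * (u - real (a*K+r)) else 0)"
proof -
  let ?f = "\<lambda>j. c j * rmp (u - real ((j+1) * K))"
  have z: "?f j = 0" if "a < j" "j < C" for j
  proof -
    have "(a+2)*K \<le> (j+1)*K" using that by (intro mult_le_mono1) auto
    then have "real ((a+2)*K) \<le> real ((j+1)*K)" by (simp only: of_nat_le_iff)
    then have "u - real ((j+1)*K) \<le> -1" using u r K
      by (simp add: algebra_simps)
    then show ?thesis by (simp add: rmp_0)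
  qed
  have lo: "?f j = c j" if "j < a" for j
  proof -
    have "(j+1)*K \<le> a*K" using that by (intro mult_le_mono1) auto
    then have "real ((j+1)*K) \<le> real (a*K)" by (simp only: of_nat_le_iff)
    then have "u - real ((j+1)*K) \<ge> 0" using u by (simp add: algebra_simps)
    then show ?thesis by (simp add: rmp_1)
  qed
  have fa: "?f a = (if r = K - 1 then c a * (u - real (a*K+r)) else 0)"
  proof (cases "r = K - 1")
    case True
    then have "real ((a+1)*K) = real (a*K+r) + 1" using K by (simp add: algebra_simps of_nat_diff)
    then have "rmp (u - real ((a+1)*K)) = u - real (a*K+r)" using u by (subst rmp_mid) auto
    then show ?thesis using True by simp
  next
    case False
    then have "r + 2 \<le> K" using r by simp
    then have "a*K+r + 2 \<le> (a+1)*K" by (simp add: algebra_simps)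
    then have "real (a*K+r) + 2 \<le> real ((a+1)*K)" by (metis of_nat_add of_nat_le_iff of_nat_numeral)
    then have "rmp (u - real ((a+1)*K)) = 0" using u by (intro rmp_0) auto
    then show ?thesis using False by simp
  qed
  have "stw K C c u = (\<Sum>j<a. ?f j) + ?f a" unfolding stw_def by (rule sum_three[OF aC z])
  moreover have "(\<Sum>j<a. ?f j) = (\<Sum>j<a. c j)" by (rule sum.cong[OF refl], rule lo, simp)
  ultimately show ?thesis using fa by simp
qed

fun Zk :: "(nat \<Rightarrow> real) \<Rightarrow> nat \<Rightarrow> nat \<Rightarrow> real" where
  "Zk f e 0 = 1/2"
| "Zk f e (Suc k) = f e / 2 + Zk f (Suc e) k / 2"

lemma Zk_bounds:
  assumes "\<And>\<tau>. e \<le> \<tau> \<Longrightarrow> \<tau> < e + k \<Longrightarrow> f \<tau> \<in> {0,1}"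
  shows "1 / 2^(k+1) \<le> Zk f e k \<and> Zk f e k \<le> 1 - 1 / 2^(k+1)"
  using assms
proof (induction k arbitrary: e)
  case 0 then show ?case by simp
next
  case (Suc k)
  have IH: "1 / 2^(k+1) \<le> Zk f (Suc e) k \<and> Zk f (Suc e) k \<le> 1 - 1 / 2^(k+1)"
    using Suc.prems by (intro Suc.IH) auto
  have fe: "f e \<in> {0,1}" using Suc.prems by auto
  have p: "(2::real)^(Suc k + 1) = 2 * 2^(k+1)" by simp
  show ?case using IH fe unfolding p by (auto simp: field_simps)
qed

locale cons =
  fixes W L :: nat and th :: "nat \<Rightarrow> real"
  assumes W1: "1 \<le> W" and L1: "1 \<le> L" and thv: "\<And>i. i < (W*L)*(W*L) \<Longrightarrow> th i \<in> {0,1}"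
begin

abbreviation "M \<equiv> W * L"

lemma M1: "1 \<le> M" using W1 L1 by simp

definition idx :: "nat \<Rightarrow> nat \<Rightarrow> nat \<Rightarrow> nat" where
  "idx a \<beta> \<tau> = (let w = \<beta> * L + (if even \<beta> then \<tau> else L - 1 - \<tau>) in a * M + (if even a then w else M - 1 - w))"

definition Yw :: "nat \<Rightarrow> nat \<Rightarrow> real" where
  "Yw a \<beta> = Zk (\<lambda>\<tau>. th (idx a \<beta> \<tau>)) 0 L"

definition Dt :: "nat \<Rightarrow> nat \<Rightarrow> real" where
  "Dt k a = (if k = 0 then Yw a 0 else Yw a k - Yw a (k - 1)) + 1"

definition cD :: "nat \<Rightarrow> nat \<Rightarrow> real" where
  "cD k j = (if j + 1 < M then Dt k (j+1) - Dt k j else 0)"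

definition vv :: "real \<Rightarrow> real" where "vv x = snk M M x"
definition Df :: "nat \<Rightarrow> real \<Rightarrow> real" where "Df k x = Dt k 0 + stw M M (cD k) x"
definition bbv :: "real \<Rightarrow> real" where "bbv v = stw L W (\<lambda>_. 1) v"
definition ttv :: "real \<Rightarrow> real" where "ttv v = snk L W v"
definition yf :: "(nat \<Rightarrow> real) \<Rightarrow> real \<Rightarrow> real" where
  "yf D b = (\<Sum>k<W. relu (D k + 2 * (b - real k))) - 2 * (\<Sum>k<W. relu (b - real k)) - relu b - 1"
definition Kf :: "nat \<Rightarrow> real" where "Kf e = 2 ^ (L - e)"
definition st :: "nat \<Rightarrow> real \<Rightarrow> real" where
  "st e z = relu (Kf e * (z - 1/2) + 1/2) - relu (Kf e * (z - 1/2) - 1/2)"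
primrec zz :: "nat \<Rightarrow> real \<Rightarrow> real" where
  "zz 0 y = y"
| "zz (Suc e) y = 2 * zz e y - st e (zz e y)"
definition sel :: "nat \<Rightarrow> real \<Rightarrow> real \<Rightarrow> real" where
  "sel e y t = relu (st e (zz e y) - (relu (t - real e) + relu (real e - t)))"
definition Ephi :: "real \<Rightarrow> real \<Rightarrow> real" where
  "Ephi y t = (\<Sum>e<L. sel e y t)"
definition phi :: "real \<Rightarrow> real" where
  "phi x = Ephi (yf (\<lambda>k. Df k x) (bbv (vv x))) (ttv (vv x))"

lemma idx_lt: assumes "a < M" "\<beta> < W" "\<tau> < L" shows "idx a \<beta> \<tau> < M * M"
proof -
  define w where "w = \<beta> * L + (if even \<beta> then \<tau> else L - 1 - \<tau>)"
  have "\<beta> * L + L \<le> W * L" using assms(2) by (metis add.commute mult_Suc mult_le_mono1 Suc_leI)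
  then have w: "w < M" using assms(3) unfolding w_def by auto
  have "(if even a then w else M - 1 - w) < M" using w by auto
  moreover have "a * M + M \<le> M * M" using assms(1) by (metis add.commute mult_Suc mult_le_mono1 Suc_leI)
  ultimately show ?thesis unfolding idx_def w_def[symmetric] Let_def by linarith
qed

lemma Yw_bounds: assumes "a < M" "\<beta> < W" shows "0 \<le> Yw a \<beta> \<and> Yw a \<beta> \<le> 1"
proof -
  have "1 / 2^(L+1) \<le> Yw a \<beta> \<and> Yw a \<beta> \<le> 1 - 1 / 2^(L+1)"
  proof -
    have "\<forall>\<tau><L. th (idx a \<beta> \<tau>) \<in> {0,1}" using thv idx_lt assms by blast
    then show ?thesis unfolding Yw_def by (intro Zk_bounds) auto
  qed
  moreover have "(0::real) \<le> 1 / 2^(L+1)" by simp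
  ultimately show ?thesis by linarith
qed

lemma Dt_bounds: assumes "a < M" "k < W" shows "0 \<le> Dt k a \<and> Dt k a \<le> 2"
proof -
  have "k - 1 < W" "0 < W" using assms by auto
  then show ?thesis
    using Yw_bounds[OF assms(1), of k] Yw_bounds[OF assms(1), of "k-1"] Yw_bounds[OF assms(1), of 0] assms
    unfolding Dt_def by auto
qed

lemma Dt_sum: "(\<Sum>k<Suc \<beta>. Dt k a) = Yw a \<beta> + real (Suc \<beta>)"
  by (induction \<beta>) (auto simp: Dt_def)

lemma st_bounds: "0 \<le> st e z \<and> st e z \<le> 1"
  unfolding st_def relu_def by auto

lemma st_val:
  assumes "e < L" and fe: "f e \<in> {0,1}" and Z: "1 / 2^(L - e) \<le> Zk f (Suc e) (L - Suc e)" "Zk f (Suc e) (L - Suc e) \<le> 1 - 1 / 2^(L - e)"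
  shows "st e (Zk f e (L - e)) = f e"
proof -
  define m where "m = L - Suc e"
  have Le: "L - e = Suc m" using assms(1) unfolding m_def by simp
  define Z where "Z = Zk f (Suc e) m"
  have zk: "Zk f e (L - e) = f e / 2 + Z / 2" unfolding Le Z_def by simp
  have K: "Kf e = 2 * 2^m" unfolding Kf_def Le by simp
  have Zb: "1 / (2 * 2^m) \<le> Z" "Z \<le> 1 - 1 / (2 * 2^m)" using Z unfolding Z_def m_def[symmetric] Le by auto
  have pm: "(0::real) < 2^m" by simp
  have arg: "Kf e * (Zk f e (L - e) - 1/2) = 2^m * (Z + f e - 1)"
    unfolding zk K by (simp add: field_simps)
  have lo: "2^m * Z \<ge> 1/2" using Zb(1) pm by (simp add: field_simps)
  have hi: "2^m * (Z - 1) \<le> -1/2" using Zb(2) pm by (simp add: field_simps)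
  show ?thesis
  proof (cases "f e = 1")
    case True
    then have "Kf e * (Zk f e (L - e) - 1/2) \<ge> 1/2" using arg lo by simp
    then show ?thesis unfolding st_def relu_def using True by auto
  next
    case False
    then have "f e = 0" using fe by auto
    then have "Kf e * (Zk f e (L - e) - 1/2) \<le> -1/2" using arg hi by (simp add: algebra_simps)
    then show ?thesis unfolding st_def relu_def using \<open>f e = 0\<close> by auto
  qed
qed

lemma zz_Zk:
  assumes "\<And>\<tau>. \<tau> < L \<Longrightarrow> f \<tau> \<in> {0,1}" "e \<le> L"
  shows "zz e (Zk f 0 L) = Zk f e (L - e)"
  using assms(2)
proof (induction e)
  case 0 then show ?case by simp
next
  case (Suc e)
  have eL: "e < L" using Suc.prems by simp
  have IH: "zz e (Zk f 0 L) = Zk f e (L - e)" using Suc.prems by (intro Suc.IH) simp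
  have b: "1 / 2^(L - Suc e + 1) \<le> Zk f (Suc e) (L - Suc e) \<and> Zk f (Suc e) (L - Suc e) \<le> 1 - 1 / 2^(L - Suc e + 1)"
    using assms(1) by (intro Zk_bounds) auto
  have le: "L - Suc e + 1 = L - e" using eL by simp
  have s: "st e (Zk f e (L - e)) = f e"
    using b unfolding le by (intro st_val[of e f, OF eL assms(1)[OF eL]]) auto
  have Le: "L - e = Suc (L - Suc e)" using eL by simp
  show ?case using IH s by (simp add: Le)
qed

lemma Ephi_int:
  assumes "\<tau> < L" shows "Ephi y (real \<tau>) = st \<tau> (zz \<tau> y)"
proof -
  have "sel e y (real \<tau>) = (if e = \<tau> then st \<tau> (zz \<tau> y) else 0)" if "e < L" for e
  proof (cases "e = \<tau>")
    case True then show ?thesis using st_bounds[of \<tau> "zz \<tau> y"] by (simp add: sel_def relu_def)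
  next
    case False
    then have "relu (real \<tau> - real e) + relu (real e - real \<tau>) \<ge> 1" unfolding relu_def by auto
    then show ?thesis using False st_bounds[of e "zz e y"] by (simp add: sel_def relu_def)
  qed
  then have "Ephi y (real \<tau>) = (\<Sum>e<L. if e = \<tau> then st \<tau> (zz \<tau> y) else 0)"
    unfolding Ephi_def by (intro sum.cong) auto
  then show ?thesis using assms by simp
qed

lemma yf_formula:
  fixes \<beta> :: nat and b :: real
  assumes D: "\<And>k. k < W \<Longrightarrow> 0 \<le> D k \<and> D k \<le> 2" and \<beta>: "\<beta> < W" and b: "real \<beta> \<le> b" "b \<le> real \<beta> + 1"
  shows "yf D b = (\<Sum>k<Suc \<beta>. D k) + (if Suc \<beta> < W then relu (D (Suc \<beta>) + 2 * (b - real (Suc \<beta>))) else 0) - b - 1"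
proof -
  define T where "T k = relu (D k + 2 * (b - real k)) - 2 * relu (b - real k)" for k
  have "yf D b = (\<Sum>k<W. T k) - relu b - 1"
    unfolding yf_def T_def by (simp add: sum_subtractf sum_distrib_left)
  have T1: "T k = D k" if "k < Suc \<beta>" for k
  proof -
    have k: "k < W" "real k \<le> real \<beta>" using that \<beta> by auto
    have h1: "b - real k \<ge> 0" using k b by linarith
    have h2: "0 \<le> D k" using D[OF k(1)] by simp
    have "D k + 2 * (b - real k) \<ge> 0" using h1 h2 by (intro add_nonneg_nonneg) auto
    then show ?thesis using h1 unfolding T_def relu_def by simp
  qed
  have T2: "T k = 0" if "Suc \<beta> < k" "k < W" for k
  proof -
    have "real k \<ge> real \<beta> + 2" using that by simp
    moreover have "D k \<le> 2" using D[OF that(2)] by simp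
    ultimately have "b - real k \<le> 0" "D k + 2 * (b - real k) \<le> 0" using b by (smt (verit))+
    then show ?thesis unfolding T_def relu_def by simp
  qed
  have T3: "T (Suc \<beta>) = relu (D (Suc \<beta>) + 2 * (b - real (Suc \<beta>)))"
  proof -
    have "b - real (Suc \<beta>) \<le> 0" using b by simp
    then show ?thesis unfolding T_def relu_def by simp
  qed
  have S: "(\<Sum>k<W. T k) = (\<Sum>k<Suc \<beta>. D k) + (if Suc \<beta> < W then relu (D (Suc \<beta>) + 2 * (b - real (Suc \<beta>))) else 0)"
  proof (cases "Suc \<beta> < W")
    case True
    have "(\<Sum>k<W. T k) = (\<Sum>k<Suc \<beta>. T k) + T (Suc \<beta>)"
      by (rule sum_three[OF True T2])
    moreover have "(\<Sum>k<Suc \<beta>. T k) = (\<Sum>k<Suc \<beta>. D k)" by (rule sum.cong[OF refl], rule T1, simp)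
    ultimately show ?thesis using True T3 by simp
  next
    case False
    then have "W = Suc \<beta>" using \<beta> by simp
    then show ?thesis using T1 by simp
  qed
  have "b \<ge> 0" using b by simp
  then have "relu b = b" unfolding relu_def by simp
  then show ?thesis using S \<open>yf D b = (\<Sum>k<W. T k) - relu b - 1\<close> by simp
qed

end

context cons begin

lemma st_Zk:
  assumes f: "\<And>\<tau>. \<tau> < L \<Longrightarrow> f \<tau> \<in> {0,1}" and e: "e < L"
  shows "st e (Zk f e (L - e)) = f e"
proof -
  have b: "1 / 2^(L - Suc e + 1) \<le> Zk f (Suc e) (L - Suc e) \<and> Zk f (Suc e) (L - Suc e) \<le> 1 - 1 / 2^(L - Suc e + 1)"
    using f by (intro Zk_bounds) auto
  have le: "L - Suc e + 1 = L - e" using e by simp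
  show ?thesis using b unfolding le by (intro st_val[of e f, OF e f[OF e]]) auto
qed

lemma Df_int:
  assumes "a < M" "r < M"
  shows "Df k (real (a*M+r)) = Dt k a"
proof -
  have "stw M M (cD k) (real (a*M+r)) = (\<Sum>j<a. cD k j)"
    using stw_terms[OF M1 assms(2) assms(1), of "real (a*M+r)" "cD k"] by simp
  also have "\<dots> = (\<Sum>j<a. Dt k (Suc j) - Dt k j)"
    using assms(1) by (intro sum.cong) (auto simp: cD_def)
  also have "\<dots> = Dt k a - Dt k 0" by (rule sum_lessThan_telescope)
  finally show ?thesis unfolding Df_def by simp
qed

lemma phi_int: assumes "n < M*M" shows "phi (real n) = th n"
proof -
  define a r where "a = n div M" "r = n mod M"
  have n: "n = a*M + r" using a_r_def by (metis div_mult_mod_eq)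
  have r: "r < M" using a_r_def M1 by simp
  have a: "a < M" using assms a_r_def M1 by (metis div_less_iff_less_mult less_le_trans zero_less_one)
  define w where "w = (if even a then r else M - 1 - r)"
  have w: "w < M" using r unfolding w_def by auto
  have vv: "vv (real n) = real w"
    using snk_int[OF M1, of n M] assms r unfolding vv_def w_def a_r_def[symmetric]
    by (auto simp: of_nat_diff)
  have Df: "Df k (real n) = Dt k a" for k using Df_int[OF a r] n by simp
  define \<beta> \<rho> where "\<beta> = w div L" "\<rho> = w mod L"
  have w2: "w = \<beta>*L + \<rho>" using \<beta>_\<rho>_def by simp
  have \<rho>: "\<rho> < L" using \<beta>_\<rho>_def L1 by simp
  have \<beta>: "\<beta> < W" using w \<beta>_\<rho>_def L1 by (metis div_less_iff_less_mult less_le_trans zero_less_one)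
  have bb: "bbv (real w) = real \<beta>"
    using stw_terms[OF L1 \<rho> \<beta>, of "real w" "\<lambda>_. 1"] w2 unfolding bbv_def by simp
  define \<tau> where "\<tau> = (if even \<beta> then \<rho> else L - 1 - \<rho>)"
  have \<tau>: "\<tau> < L" using \<rho> L1 unfolding \<tau>_def by auto
  have tt: "ttv (real w) = real \<tau>"
    using snk_int[OF L1, of w W] w \<rho> unfolding ttv_def \<tau>_def \<beta>_\<rho>_def[symmetric]
    by (auto simp: of_nat_diff mult.commute)
  have yf: "yf (\<lambda>k. Dt k a) (real \<beta>) = Yw a \<beta>"
  proof -
    have e: "yf (\<lambda>k. Dt k a) (real \<beta>) = (\<Sum>k<Suc \<beta>. Dt k a) +
       (if Suc \<beta> < W then relu (Dt (Suc \<beta>) a + 2 * (real \<beta> - real (Suc \<beta>))) else 0) - real \<beta> - 1"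
      using Dt_bounds[OF a] by (intro yf_formula \<beta>) auto
    have z: "relu (Dt (Suc \<beta>) a + 2 * (real \<beta> - real (Suc \<beta>))) = 0" if "Suc \<beta> < W"
      using Dt_bounds[OF a that] unfolding relu_def by simp
    show ?thesis using z unfolding e Dt_sum by (cases "Suc \<beta> < W") auto
  qed
  define f where "f = (\<lambda>\<tau>. th (idx a \<beta> \<tau>))"
  have f: "f t \<in> {0,1}" if "t < L" for t using thv idx_lt[OF a \<beta> that] unfolding f_def by blast
  have "phi (real n) = Ephi (Yw a \<beta>) (real \<tau>)"
    unfolding phi_def vv Df bb tt yf by simp
  also have "\<dots> = st \<tau> (zz \<tau> (Zk f 0 L))" unfolding Ephi_int[OF \<tau>] Yw_def f_def ..
  also have "\<dots> = f \<tau>" using zz_Zk[of f \<tau>] f \<tau> st_Zk[of f \<tau>] by simp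
  also have "idx a \<beta> \<tau> = n"
  proof -
    have "(if even \<beta> then \<tau> else L - 1 - \<tau>) = \<rho>" using \<rho> unfolding \<tau>_def by auto
    then have A: "\<beta> * L + (if even \<beta> then \<tau> else L - 1 - \<tau>) = w" using w2 by simp
    have B: "(if even a then w else M - 1 - w) = r" using r unfolding w_def by auto
    show ?thesis by (simp only: idx_def Let_def A B n)
  qed
  then have "f \<tau> = th n" unfolding f_def by simp
  finally show ?thesis .
qed

end

lemma lip_glue:
  fixes f :: "real \<Rightarrow> real"
  assumes H: "\<And>(n::int) x y. real_of_int n \<le> x \<Longrightarrow> x \<le> real_of_int n + 1 \<Longrightarrow> real_of_int n \<le> y \<Longrightarrow> y \<le> real_of_int n + 1 \<Longrightarrow> \<bar>f x - f y\<bar> \<le> C * \<bar>x - y\<bar>"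
  shows "\<bar>f x - f y\<bar> \<le> C * \<bar>x - y\<bar>"
proof -
  have main: "\<forall>x. x \<le> y \<longrightarrow> nat (\<lfloor>y\<rfloor> - \<lfloor>x\<rfloor>) = k \<longrightarrow> \<bar>f x - f y\<bar> \<le> C * (y - x)" for k y
  proof (induction k)
    case 0
    show ?case
    proof (intro allI impI)
      fix x assume xy: "x \<le> y" and k: "nat (\<lfloor>y\<rfloor> - \<lfloor>x\<rfloor>) = 0"
      have "\<lfloor>x\<rfloor> \<le> \<lfloor>y\<rfloor>" using xy floor_mono by auto
      then have e: "\<lfloor>y\<rfloor> = \<lfloor>x\<rfloor>" using k by simp
      have a: "real_of_int \<lfloor>x\<rfloor> \<le> x" "x \<le> real_of_int \<lfloor>x\<rfloor> + 1" by linarith+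
      have b: "real_of_int \<lfloor>x\<rfloor> \<le> y" "y \<le> real_of_int \<lfloor>x\<rfloor> + 1" using e xy by linarith+
      have "\<bar>f x - f y\<bar> \<le> C * \<bar>x - y\<bar>" by (rule H[OF a b])
      then show "\<bar>f x - f y\<bar> \<le> C * (y - x)" using xy by simp
    qed
  next
    case (Suc k)
    show ?case
    proof (intro allI impI)
      fix x assume xy: "x \<le> y" and k: "nat (\<lfloor>y\<rfloor> - \<lfloor>x\<rfloor>) = Suc k"
      define m where "m = real_of_int (\<lfloor>x\<rfloor> + 1)"
      have fm: "\<lfloor>m\<rfloor> = \<lfloor>x\<rfloor> + 1" unfolding m_def by simp
      have "\<lfloor>y\<rfloor> \<ge> \<lfloor>x\<rfloor> + 1" using k by simp
      then have my: "m \<le> y" unfolding m_def by linarith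
      have a: "real_of_int \<lfloor>x\<rfloor> \<le> x" "x \<le> real_of_int \<lfloor>x\<rfloor> + 1" by linarith+
      have b: "real_of_int \<lfloor>x\<rfloor> \<le> m" "m \<le> real_of_int \<lfloor>x\<rfloor> + 1" unfolding m_def by simp_all
      have xm: "x \<le> m" unfolding m_def by linarith
      have 1: "\<bar>f x - f m\<bar> \<le> C * (m - x)" using H[OF a b] xm by simp
      have "nat (\<lfloor>y\<rfloor> - \<lfloor>m\<rfloor>) = k" using k fm by simp
      then have 2: "\<bar>f m - f y\<bar> \<le> C * (y - m)" using Suc.IH my by blast
      have "\<bar>f x - f y\<bar> \<le> \<bar>f x - f m\<bar> + \<bar>f m - f y\<bar>" by linarith
      also have "\<dots> \<le> C * (m - x) + C * (y - m)" using 1 2 by linarith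
      also have "\<dots> = C * (y - x)" by (simp add: algebra_simps)
      finally show "\<bar>f x - f y\<bar> \<le> C * (y - x)" .
    qed
  qed
  show ?thesis
  proof (cases "x \<le> y")
    case True then show ?thesis using main[of y "nat (\<lfloor>y\<rfloor> - \<lfloor>x\<rfloor>)"] by simp
  next
    case False
    then have "\<bar>f y - f x\<bar> \<le> C * (x - y)" using main[of x "nat (\<lfloor>x\<rfloor> - \<lfloor>y\<rfloor>)"] by simp
    then show ?thesis using False by (simp add: abs_minus_commute)
  qed
qed

lemma relu_lip: "\<bar>relu a - relu b\<bar> \<le> \<bar>a - b\<bar>"
  unfolding relu_def by (auto simp: max_def)

lemma relu_lip2: "\<bar>(relu (c + 2 * b) - b) - (relu (c + 2 * b') - b')\<bar> \<le> \<bar>b - b'\<bar>"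
  unfolding relu_def by (auto simp: max_def)

lemma clampish_lip: "\<bar>(relu (A + 1/2) - relu (A - 1/2)) - (relu (B + 1/2) - relu (B - 1/2))\<bar> \<le> \<bar>A - B\<bar>"
  unfolding relu_def by (auto simp: max_def)

context cons begin

lemma Kf_pos: "Kf e > 0" unfolding Kf_def by simp

lemma st_lip: "\<bar>st e z - st e z'\<bar> \<le> Kf e * \<bar>z - z'\<bar>"
proof -
  have "\<bar>st e z - st e z'\<bar> \<le> \<bar>Kf e * (z - 1/2) - Kf e * (z' - 1/2)\<bar>"
    unfolding st_def by (rule clampish_lip)
  also have "Kf e * (z - 1/2) - Kf e * (z' - 1/2) = Kf e * (z - z')" by (simp add: algebra_simps)
  then have "\<bar>Kf e * (z - 1/2) - Kf e * (z' - 1/2)\<bar> = Kf e * \<bar>z - z'\<bar>" using Kf_pos[of e] by (simp add: abs_mult)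
  finally show ?thesis .
qed

lemma zz_lip: "\<bar>zz e y - zz e y'\<bar> \<le> (2^(L+1))^e * \<bar>y - y'\<bar>"
proof (induction e)
  case 0 then show ?case by simp
next
  case (Suc e)
  have K: "Kf e \<le> 2^L" unfolding Kf_def by (intro power_increasing) auto
  have two: "(2::real) \<le> 2^L" using L1 by (metis power_increasing power_one_right zero_le_numeral one_le_numeral Suc_le_eq linorder_not_le nat_less_le) 
  have "zz (Suc e) y - zz (Suc e) y' = 2 * (zz e y - zz e y') - (st e (zz e y) - st e (zz e y'))"
    by (simp add: algebra_simps)
  then have "\<bar>zz (Suc e) y - zz (Suc e) y'\<bar> \<le> \<bar>2 * (zz e y - zz e y')\<bar> + \<bar>st e (zz e y) - st e (zz e y')\<bar>"
    by (metis abs_triangle_ineq4)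
  then have "\<bar>zz (Suc e) y - zz (Suc e) y'\<bar> \<le> 2 * \<bar>zz e y - zz e y'\<bar> + \<bar>st e (zz e y) - st e (zz e y')\<bar>"
    using abs_mult[of 2 "zz e y - zz e y'"] by simp
  also have "\<dots> \<le> 2 * \<bar>zz e y - zz e y'\<bar> + Kf e * \<bar>zz e y - zz e y'\<bar>"
    using st_lip by simp
  also have "\<dots> = (2 + Kf e) * \<bar>zz e y - zz e y'\<bar>" by (simp add: algebra_simps)
  also have "\<dots> \<le> 2^(L+1) * \<bar>zz e y - zz e y'\<bar>"
    using K two by (intro mult_right_mono) auto
  also have "\<dots> \<le> 2^(L+1) * ((2^(L+1))^e * \<bar>y - y'\<bar>)"
    using Suc.IH by (intro mult_left_mono) auto
  finally show ?case by (simp add: algebra_simps)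
qed

lemma Ephi_lip_y:
  assumes "\<tau> < L" shows "\<bar>Ephi y (real \<tau>) - Ephi y' (real \<tau>)\<bar> \<le> 2^(L*L) * \<bar>y - y'\<bar>"
proof -
  have "\<bar>Ephi y (real \<tau>) - Ephi y' (real \<tau>)\<bar> = \<bar>st \<tau> (zz \<tau> y) - st \<tau> (zz \<tau> y')\<bar>"
    using Ephi_int[OF assms] by simp
  also have "\<dots> \<le> Kf \<tau> * \<bar>zz \<tau> y - zz \<tau> y'\<bar>" by (rule st_lip)
  also have "\<dots> \<le> Kf \<tau> * ((2^(L+1))^\<tau> * \<bar>y - y'\<bar>)"
    using zz_lip Kf_pos[of \<tau>] by (intro mult_left_mono) auto
  also have "Kf \<tau> * ((2^(L+1))^\<tau> * \<bar>y - y'\<bar>) = 2^(L - \<tau> + (L+1)*\<tau>) * \<bar>y - y'\<bar>"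
    unfolding Kf_def by (simp add: power_add power_mult)
  also have "\<dots> \<le> 2^(L*L) * \<bar>y - y'\<bar>"
  proof -
    have "L - \<tau> + (L+1)*\<tau> = L * (\<tau> + 1)" using assms by (simp add: algebra_simps)
    also have "\<dots> \<le> L * L" using assms by (intro mult_le_mono2) auto
    finally have "L - \<tau> + (L+1)*\<tau> \<le> L * L" .
    then have "(2::real)^(L - \<tau> + (L+1)*\<tau>) \<le> 2^(L*L)" by (intro power_increasing) auto
    then show ?thesis by (intro mult_right_mono) auto
  qed
  finally show ?thesis .
qed

lemma Ephi_lip_t: "\<bar>Ephi y t - Ephi y t'\<bar> \<le> real L * \<bar>t - t'\<bar>"
proof -
  have tm: "\<bar>sel e y t - sel e y t'\<bar> \<le> \<bar>t - t'\<bar>" for e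
  proof -
    have "\<bar>sel e y t - sel e y t'\<bar> \<le> \<bar>(st e (zz e y) - (relu (t - real e) + relu (real e - t))) - (st e (zz e y) - (relu (t' - real e) + relu (real e - t')))\<bar>"
      unfolding sel_def by (rule relu_lip)
    also have "\<dots> \<le> \<bar>t - t'\<bar>" unfolding relu_def by (auto simp: max_def)
    finally show ?thesis .
  qed
  have "\<bar>Ephi y t - Ephi y t'\<bar> = \<bar>\<Sum>e<L. sel e y t - sel e y t'\<bar>" unfolding Ephi_def by (simp add: sum_subtractf)
  also have "\<dots> \<le> (\<Sum>e<L. \<bar>sel e y t - sel e y t'\<bar>)" by (rule sum_abs)
  also have "\<dots> \<le> (\<Sum>e<L. \<bar>t - t'\<bar>)" using tm by (intro sum_mono) auto
  finally show ?thesis by simp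
qed

end

context cons begin

lemma vv_int:
  assumes "a < M" "r < M"
  shows "vv (real (a*M+r)) = real (if even a then r else M - 1 - r)"
proof -
  have "(a+1)*M \<le> M*M" using assms(1) by (intro mult_le_mono1) simp
  then have lt: "a*M + r < M * M" using assms(2) by simp
  have M0: "M \<noteq> 0" using M1 by simp
  have d: "(a*M+r) div M = a" "(a*M+r) mod M = r"
    using div_mult_self1[OF M0, of r a] mod_mult_self1[of r a M] assms(2) by (simp_all add: add.commute)
  show ?thesis using snk_int[OF M1 lt] assms unfolding vv_def d by (auto simp: of_nat_diff)
qed

lemma bt_int:
  assumes "w < M"
  shows "bbv (real w) = real (w div L)" "ttv (real w) = real (if even (w div L) then w mod L else L - 1 - w mod L)"
    "(if even (w div L) then w mod L else L - 1 - w mod L) < L"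
proof -
  define \<beta> \<rho> where "\<beta> = w div L" "\<rho> = w mod L"
  have w2: "w = \<beta>*L + \<rho>" using \<beta>_\<rho>_def by simp
  have \<rho>: "\<rho> < L" using \<beta>_\<rho>_def L1 by simp
  have \<beta>: "\<beta> < W" using assms \<beta>_\<rho>_def L1 by (metis div_less_iff_less_mult less_le_trans zero_less_one)
  show "bbv (real w) = real (w div L)"
    using stw_terms[OF L1 \<rho> \<beta>, of "real w" "\<lambda>_. 1"] w2 unfolding bbv_def \<beta>_\<rho>_def[symmetric] by simp
  show "ttv (real w) = real (if even (w div L) then w mod L else L - 1 - w mod L)"
    using snk_int[OF L1, of w W] assms \<rho> unfolding ttv_def \<beta>_\<rho>_def[symmetric]
    by (auto simp: of_nat_diff mult.commute)
  show "(if even (w div L) then w mod L else L - 1 - w mod L) < L" using \<rho> L1 unfolding \<beta>_\<rho>_def by auto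
qed

lemma Psi_lip:
  assumes D: "\<And>k. k < W \<Longrightarrow> 0 \<le> D k \<and> D k \<le> 2" and \<omega>: "Suc \<omega> < M"
    and v: "real \<omega> \<le> v" "v \<le> real \<omega> + 1" "real \<omega> \<le> v'" "v' \<le> real \<omega> + 1"
  shows "\<bar>Ephi (yf D (bbv v)) (ttv v) - Ephi (yf D (bbv v')) (ttv v')\<bar> \<le> 2^(L*L) * \<bar>v - v'\<bar>"
proof -
  define \<beta> \<rho> where "\<beta> = \<omega> div L" "\<rho> = \<omega> mod L"
  have w2: "\<omega> = \<beta>*L + \<rho>" using \<beta>_\<rho>_def by simp
  have \<rho>: "\<rho> < L" using \<beta>_\<rho>_def L1 by simp
  have \<beta>: "\<beta> < W" using \<omega> \<beta>_\<rho>_def L1 by (metis Suc_lessD div_less_iff_less_mult less_le_trans zero_less_one)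
  have vi: "real (\<beta>*L+\<rho>) \<le> u \<and> u \<le> real (\<beta>*L+\<rho>) + 1" if "real \<omega> \<le> u" "u \<le> real \<omega> + 1" for u
    using that w2 by simp
  have bb: "bbv u = real \<beta> + (if \<rho> = L - 1 then u - real \<omega> else 0)" if "real \<omega> \<le> u" "u \<le> real \<omega> + 1" for u
    using stw_terms[OF L1 \<rho> \<beta>, of u "\<lambda>_. 1"] vi[OF that] w2 unfolding bbv_def by simp
  have tt: "ttv u = ttv (real \<omega>) + (if \<rho> = L - 1 then 0 else sg \<beta> * (u - real \<omega>))" if "real \<omega> \<le> u" "u \<le> real \<omega> + 1" for u
    using snk_int_interval[OF L1 \<rho> \<beta>, of u] vi[OF that] w2 unfolding ttv_def by simp
  have LL: "real L \<le> 2^(L*L)"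
  proof -
    have "L < 2^L" by (rule less_exp)
    also have "(2::nat)^L \<le> 2^(L*L)" using L1 by (intro power_increasing) auto
    finally have "L < 2^(L*L)" .
    then show ?thesis by (metis less_imp_le of_nat_le_iff of_nat_numeral of_nat_power)
  qed
  show ?thesis
  proof (cases "\<rho> = L - 1")
    case True
    have "\<omega> < M" using \<omega> by simp
    obtain \<tau> where \<tau>: "\<tau> < L" "ttv (real \<omega>) = real \<tau>" using bt_int[OF \<open>\<omega> < M\<close>] by blast
    have sb: "Suc \<beta> < W"
    proof -
      have "Suc \<omega> = Suc \<beta> * L" using w2 True L1 by (simp add: algebra_simps)
      then have "Suc \<beta> * L < W * L" using \<omega> by simp
      then show ?thesis using mult_less_cancel2 by blast
    qed
    define S where "S = (\<Sum>k<Suc \<beta>. D k)"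
    define c where "c = D (Suc \<beta>) - 2 * real (Suc \<beta>)"
    have yfe: "yf D (bbv u) = S + (relu (c + 2 * bbv u) - bbv u) - 1"
      if "real \<omega> \<le> u" "u \<le> real \<omega> + 1" for u
    proof -
      have b: "real \<beta> \<le> bbv u" "bbv u \<le> real \<beta> + 1" using bb[OF that] True that by auto
      have e: "D (Suc \<beta>) + 2 * (bbv u - real (Suc \<beta>)) = c + 2 * bbv u" unfolding c_def by (simp add: algebra_simps)
      have "yf D (bbv u) = S + relu (D (Suc \<beta>) + 2 * (bbv u - real (Suc \<beta>))) - bbv u - 1"
        using yf_formula[OF D \<beta> b] sb unfolding S_def by simp
      then show ?thesis unfolding e by simp
    qed
    have "\<bar>yf D (bbv v) - yf D (bbv v')\<bar> = \<bar>(relu (c + 2 * bbv v) - bbv v) - (relu (c + 2 * bbv v') - bbv v')\<bar>"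
      unfolding yfe[OF v(1,2)] yfe[OF v(3,4)] by simp
    also have "\<dots> \<le> \<bar>bbv v - bbv v'\<bar>" by (rule relu_lip2)
    also have "\<bar>bbv v - bbv v'\<bar> = \<bar>v - v'\<bar>" using bb[OF v(1,2)] bb[OF v(3,4)] True by simp
    finally have yl: "\<bar>yf D (bbv v) - yf D (bbv v')\<bar> \<le> \<bar>v - v'\<bar>" .
    have "ttv v = real \<tau>" "ttv v' = real \<tau>" using tt[OF v(1,2)] tt[OF v(3,4)] True \<tau> by auto
    then have "\<bar>Ephi (yf D (bbv v)) (ttv v) - Ephi (yf D (bbv v')) (ttv v')\<bar> \<le> 2^(L*L) * \<bar>yf D (bbv v) - yf D (bbv v')\<bar>"
      using Ephi_lip_y[OF \<tau>(1)] by simp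
    also have "\<dots> \<le> 2^(L*L) * \<bar>v - v'\<bar>" using yl by (intro mult_left_mono) auto
    finally show ?thesis .
  next
    case False
    have "bbv v = real \<beta>" "bbv v' = real \<beta>" using bb[OF v(1,2)] bb[OF v(3,4)] False by auto
    then have "\<bar>Ephi (yf D (bbv v)) (ttv v) - Ephi (yf D (bbv v')) (ttv v')\<bar> \<le> real L * \<bar>ttv v - ttv v'\<bar>"
      using Ephi_lip_t by simp
    also have "\<bar>ttv v - ttv v'\<bar> = \<bar>v - v'\<bar>"
    proof -
      have "ttv v - ttv v' = sg \<beta> * (v - v')" using tt[OF v(1,2)] tt[OF v(3,4)] False by (simp add: algebra_simps)
      then show ?thesis by (simp add: abs_mult sg_def)
    qed
    also have "real L * \<bar>v - v'\<bar> \<le> 2^(L*L) * \<bar>v - v'\<bar>" using LL by (intro mult_right_mono) auto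
    finally show ?thesis .
  qed
qed

end

context cons begin

lemma M1r: "1 \<le> real M"
proof -
  have "real (1::nat) \<le> real M" using M1 by (simp only: of_nat_le_iff)
  then show ?thesis by simp
qed

lemma vv_le0: assumes "x \<le> 0" shows "vv x = 0"
proof -
  have "clp (real M - 1) (x - real (j*M)) = 0" for j
  proof -
    have h1: "x - real (j*M) \<le> 0" using assms of_nat_0_le_iff[of "j*M"] by linarith
    have h2: "real M - 1 \<ge> 0" using M1r by simp
    show ?thesis by (rule clp_0[OF h1 h2])
  qed
  then show ?thesis unfolding vv_def snk_def by simp
qed

lemma Df_le0: assumes "x \<le> 0" shows "Df k x = Dt k 0"
proof -
  have "rmp (x - real ((j+1)*M)) = 0" for j
  proof -
    have "M \<le> (j+1)*M" by simp
    then have "1 \<le> (j+1)*M" using M1 by linarith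
    then have "real (1::nat) \<le> real ((j+1)*M)" by (simp only: of_nat_le_iff)
    then have "real ((j+1)*M) \<ge> 1" by simp
    then show ?thesis using assms by (intro rmp_0) auto
  qed
  then show ?thesis unfolding Df_def stw_def by simp
qed

lemma phi_le0: assumes "x \<le> 0" shows "phi x = phi 0"
proof -
  have "vv x = vv 0" using vv_le0[OF assms] vv_le0[of 0] by simp
  moreover have "(\<lambda>k. Df k x) = (\<lambda>k. Df k 0)" using Df_le0[OF assms] Df_le0[of 0] by simp
  ultimately show ?thesis unfolding phi_def by simp
qed

lemma vv_geN: assumes "real (M*M) - 1 \<le> x" shows "vv x = (\<Sum>j<M. sg j * (real M - 1))"
  unfolding vv_def snk_def
proof (rule sum.cong[OF refl])
  fix j assume "j \<in> {..<M}"
  then have "Suc j * M \<le> M*M" by (intro mult_le_mono1) simp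
  then have "j*M + M \<le> M*M" by simp
  then have "real (j*M + M) \<le> real (M*M)" by (simp only: of_nat_le_iff)
  then have "real (j*M) + real M \<le> real (M*M)" by (simp only: of_nat_add)
  then have "x - real (j*M) \<ge> real M - 1" using assms by linarith
  moreover have h2: "real M - 1 \<ge> 0" using M1r by simp
  ultimately show "sg j * clp (real M - 1) (x - real (j * M)) = sg j * (real M - 1)" by (simp only: clp_c)
qed

lemma Df_geN: assumes "real (M*M) - 1 \<le> x" shows "Df k x = Dt k 0 + (\<Sum>j<M. cD k j)"
proof -
  have "stw M M (cD k) x = (\<Sum>j<M. cD k j)"
  unfolding stw_def
proof (rule sum.cong[OF refl])
  fix j assume "j \<in> {..<M}"
  show "cD k j * rmp (x - real ((j+1) * M)) = cD k j"
  proof (cases "j + 1 < M")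
    case True
    then have "Suc (j+1) * M \<le> M*M" by (intro mult_le_mono1) simp
    then have "(j+1)*M + M \<le> M*M" by simp
    then have "real ((j+1)*M + M) \<le> real (M*M)" by (simp only: of_nat_le_iff)
    then have "real ((j+1)*M) + real M \<le> real (M*M)" by (simp only: of_nat_add)
    then have "x - real ((j+1)*M) \<ge> 0" using assms M1 by linarith
    then show ?thesis by (simp add: rmp_1)
  next
    case False then show ?thesis by (simp add: cD_def)
  qed
qed
  then show ?thesis unfolding Df_def by simp
qed

lemma phi_geN: assumes "real (M*M) - 1 \<le> x" "real (M*M) - 1 \<le> y" shows "phi x = phi y"
proof -
  have "vv x = vv y" using vv_geN[OF assms(1)] vv_geN[OF assms(2)] by simp
  moreover have "(\<lambda>k. Df k x) = (\<lambda>k. Df k y)" using Df_geN[OF assms(1)] Df_geN[OF assms(2)] by simp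
  ultimately show ?thesis unfolding phi_def by simp
qed

lemma Df_interval:
  assumes a: "a < M" and r: "r < M" and x: "real (a*M+r) \<le> x" "x \<le> real (a*M+r) + 1"
  shows "Df k x = Dt k a + (if r = M - 1 then cD k a * (x - real (a*M+r)) else 0)"
proof -
  have "stw M M (cD k) x = (\<Sum>j<a. cD k j) + (if r = M - 1 then cD k a * (x - real (a*M+r)) else 0)"
    by (rule stw_terms[OF M1 r a x])
  moreover have "(\<Sum>j<a. cD k j) = Dt k a - Dt k 0"
  proof -
    have "(\<Sum>j<a. cD k j) = (\<Sum>j<a. Dt k (Suc j) - Dt k j)"
      using a by (intro sum.cong) (auto simp: cD_def)
    also have "\<dots> = Dt k a - Dt k 0" by (rule sum_lessThan_telescope)
    finally show ?thesis .
  qed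
  ultimately show ?thesis unfolding Df_def by simp
qed

lemma phi_interval_A:
  assumes m: "Suc m < M*M" and x: "real m \<le> x" "x \<le> real m + 1" and y: "real m \<le> y" "y \<le> real m + 1"
  and True: "m mod M = M - 1"
  shows "\<bar>phi x - phi y\<bar> \<le> 2^(L*L) * \<bar>x - y\<bar>"
proof -
  define a r where "a = m div M" "r = m mod M"
  have mr: "m = a*M + r" using a_r_def by (metis div_mult_mod_eq)
  have r: "r < M" using a_r_def M1 by simp
  have a: "a < M"
  proof -
    have "0 < M" using M1 by simp
    then have "(m div M < M) = (m < M * M)" by (rule div_less_iff_less_mult)
    then show ?thesis using m a_r_def by simp
  qed
  have xi: "real (a*M+r) \<le> x" "x \<le> real (a*M+r) + 1" using x mr by auto
  have yi: "real (a*M+r) \<le> y" "y \<le> real (a*M+r) + 1" using y mr by auto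
  have vvx: "vv x = vv (real m) + (if r = M - 1 then 0 else sg a * (x - real m))"
    using snk_int_interval[OF M1 r a xi] mr unfolding vv_def by simp
  have vvy: "vv y = vv (real m) + (if r = M - 1 then 0 else sg a * (y - real m))"
    using snk_int_interval[OF M1 r a yi] mr unfolding vv_def by simp
  define w where "w = (if even a then r else M - 1 - r)"
  have vvm: "vv (real m) = real w" using vv_int[OF a r] mr unfolding w_def by simp
  have w: "w < M" using r unfolding w_def by auto
    have True: "r = M - 1" using True a_r_def by simp
    have a1: "Suc a < M"
    proof -
      have "Suc m = a * M + M" using mr True M1 by simp
      then have "Suc m = Suc a * M" by simp
      then have "Suc a * M < M * M" using m by simp
      then show ?thesis using mult_less_cancel2 by blast
    qed
    have vx: "vv x = real w" "vv y = real w" using vvx vvy vvm True by auto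
    define \<beta> where "\<beta> = w div L"
    define \<tau> where "\<tau> = (if even (w div L) then w mod L else L - 1 - w mod L)"
    have bt: "bbv (real w) = real \<beta>" "ttv (real w) = real \<tau>" "\<tau> < L"
      using bt_int[OF w] unfolding \<beta>_def \<tau>_def by auto
    have \<beta>: "\<beta> < W"
    proof -
      have "0 < L" using L1 by simp
      then have "(w div L < W) = (w < W * L)" by (rule div_less_iff_less_mult)
      then show ?thesis using w \<beta>_def by simp
    qed
    have Dfu: "Df k u = Dt k a + cD k a * (u - real m)" if "real m \<le> u" "u \<le> real m + 1" for k u
      using Df_interval[OF a r, of u k] that mr True by simp
    have Dfb: "0 \<le> Df k u \<and> Df k u \<le> 2" if "k < W" "real m \<le> u" "u \<le> real m + 1" for k u
    proof -
      have c: "cD k a = Dt k (Suc a) - Dt k a" using a1 unfolding cD_def by simp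
      define l where "l = u - real m"
      have l: "0 \<le> l" "l \<le> 1" using that unfolding l_def by auto
      have "Df k u = Dt k a + cD k a * l" using Dfu[OF that(2,3)] unfolding l_def by simp
      also have "\<dots> = (1 - l) * Dt k a + l * Dt k (Suc a)" unfolding c by (simp add: algebra_simps)
      finally have "Df k u = (1 - l) * Dt k a + l * Dt k (Suc a)" .
      moreover have "0 \<le> Dt k a" "Dt k a \<le> 2" "0 \<le> Dt k (Suc a)" "Dt k (Suc a) \<le> 2"
        using Dt_bounds[OF a that(1)] Dt_bounds[OF a1 that(1)] by auto
      moreover have "0 \<le> (1 - l) * Dt k a" "0 \<le> l * Dt k (Suc a)" using l Dt_bounds[OF a that(1)] Dt_bounds[OF a1 that(1)] by auto
      moreover have "(1 - l) * Dt k a \<le> (1 - l) * 2" using l Dt_bounds[OF a that(1)] by (intro mult_left_mono) auto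
      moreover have "l * Dt k (Suc a) \<le> l * 2" using l Dt_bounds[OF a1 that(1)] by (intro mult_left_mono) auto
      moreover have "(1 - l) * 2 = 2 - 2 * l" "l * 2 = 2 * l" by simp_all
      ultimately have "0 \<le> Df k u" "Df k u \<le> 2" by linarith+
      then show ?thesis by simp
    qed
    have yfu: "yf (\<lambda>k. Df k u) (real \<beta>) = (\<Sum>k<Suc \<beta>. Df k u) - real \<beta> - 1" if "real m \<le> u" "u \<le> real m + 1" for u
    proof -
      have e: "yf (\<lambda>k. Df k u) (real \<beta>) = (\<Sum>k<Suc \<beta>. Df k u) +
         (if Suc \<beta> < W then relu (Df (Suc \<beta>) u + 2 * (real \<beta> - real (Suc \<beta>))) else 0) - real \<beta> - 1"
        using Dfb that by (intro yf_formula \<beta>) auto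
      have z: "relu (Df (Suc \<beta>) u + 2 * (real \<beta> - real (Suc \<beta>))) = 0" if "Suc \<beta> < W"
        using Dfb[OF that \<open>real m \<le> u\<close> \<open>u \<le> real m + 1\<close>] unfolding relu_def by simp
      show ?thesis using z unfolding e by (cases "Suc \<beta> < W") auto
    qed
    have "(\<Sum>k<Suc \<beta>. Df k x) - (\<Sum>k<Suc \<beta>. Df k y) = (\<Sum>k<Suc \<beta>. Df k x - Df k y)"
      by (simp add: sum_subtractf)
    also have "\<dots> = (\<Sum>k<Suc \<beta>. cD k a * (x - y))"
    proof (rule sum.cong[OF refl])
      fix k show "Df k x - Df k y = cD k a * (x - y)" using Dfu[OF x, of k] Dfu[OF y, of k] by (simp add: algebra_simps)
    qed
    also have "\<dots> = (\<Sum>k<Suc \<beta>. cD k a) * (x - y)" by (rule sum_distrib_right[symmetric])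
    also have "(\<Sum>k<Suc \<beta>. cD k a) = (\<Sum>k<Suc \<beta>. Dt k (Suc a)) - (\<Sum>k<Suc \<beta>. Dt k a)"
      using a1 unfolding cD_def by (simp add: sum_subtractf)
    also have "\<dots> = Yw (Suc a) \<beta> - Yw a \<beta>" unfolding Dt_sum by simp
    finally have dy: "yf (\<lambda>k. Df k x) (real \<beta>) - yf (\<lambda>k. Df k y) (real \<beta>) = (Yw (Suc a) \<beta> - Yw a \<beta>) * (x - y)"
      using yfu[OF x] yfu[OF y] by simp
    have "\<bar>Yw (Suc a) \<beta> - Yw a \<beta>\<bar> \<le> 1" using Yw_bounds[OF a \<beta>] Yw_bounds[OF a1 \<beta>] by auto
    then have "\<bar>Yw (Suc a) \<beta> - Yw a \<beta>\<bar> * \<bar>x - y\<bar> \<le> 1 * \<bar>x - y\<bar>" by (intro mult_right_mono) auto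
    then have dyl: "\<bar>yf (\<lambda>k. Df k x) (real \<beta>) - yf (\<lambda>k. Df k y) (real \<beta>)\<bar> \<le> \<bar>x - y\<bar>"
      unfolding dy abs_mult by simp
    have "\<bar>phi x - phi y\<bar> = \<bar>Ephi (yf (\<lambda>k. Df k x) (real \<beta>)) (real \<tau>) - Ephi (yf (\<lambda>k. Df k y) (real \<beta>)) (real \<tau>)\<bar>"
      unfolding phi_def vx bt by simp
    also have "\<dots> \<le> 2^(L*L) * \<bar>yf (\<lambda>k. Df k x) (real \<beta>) - yf (\<lambda>k. Df k y) (real \<beta>)\<bar>"
      by (rule Ephi_lip_y[OF bt(3)])
    also have "\<dots> \<le> 2^(L*L) * \<bar>x - y\<bar>" using dyl by (intro mult_left_mono) auto
    finally show ?thesis .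
qed

lemma phi_interval_B:
  assumes m: "Suc m < M*M" and x: "real m \<le> x" "x \<le> real m + 1" and y: "real m \<le> y" "y \<le> real m + 1"
  and False: "m mod M \<noteq> M - 1"
  shows "\<bar>phi x - phi y\<bar> \<le> 2^(L*L) * \<bar>x - y\<bar>"
proof -
  define a r where "a = m div M" "r = m mod M"
  have mr: "m = a*M + r" using a_r_def by (metis div_mult_mod_eq)
  have r: "r < M" using a_r_def M1 by simp
  have a: "a < M"
  proof -
    have "0 < M" using M1 by simp
    then have "(m div M < M) = (m < M * M)" by (rule div_less_iff_less_mult)
    then show ?thesis using m a_r_def by simp
  qed
  have xi: "real (a*M+r) \<le> x" "x \<le> real (a*M+r) + 1" using x mr by auto
  have yi: "real (a*M+r) \<le> y" "y \<le> real (a*M+r) + 1" using y mr by auto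
  have vvx: "vv x = vv (real m) + (if r = M - 1 then 0 else sg a * (x - real m))"
    using snk_int_interval[OF M1 r a xi] mr unfolding vv_def by simp
  have vvy: "vv y = vv (real m) + (if r = M - 1 then 0 else sg a * (y - real m))"
    using snk_int_interval[OF M1 r a yi] mr unfolding vv_def by simp
  define w where "w = (if even a then r else M - 1 - r)"
  have vvm: "vv (real m) = real w" using vv_int[OF a r] mr unfolding w_def by simp
  have w: "w < M" using r unfolding w_def by auto
    have False: "r \<noteq> M - 1" using False a_r_def by simp
    have Dfc: "Df k u = Dt k a" if "real m \<le> u" "u \<le> real m + 1" for k u
      using Df_interval[OF a r, of u k] that mr False by simp
    have r2: "r + 2 \<le> M" using False r by simp
    define \<omega> where "\<omega> = (if even a then w else w - 1)"
    have \<omega>: "Suc \<omega> < M" using r2 unfolding \<omega>_def w_def by auto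
    have vr: "real \<omega> \<le> vv u \<and> vv u \<le> real \<omega> + 1" if "real m \<le> u" "u \<le> real m + 1" for u
    proof -
      have vu: "vv u = real w + sg a * (u - real m)"
        using snk_int_interval[OF M1 r a, of u] that mr vvm False unfolding vv_def by simp
      show ?thesis
      proof (cases "even a")
        case True then show ?thesis using vu that unfolding \<omega>_def sg_def by auto
      next
        case False
        then have "w \<ge> 1" "real (w - 1) = real w - 1" using r2 unfolding w_def by auto
        then show ?thesis using vu that False unfolding \<omega>_def sg_def by auto
      qed
    qed
    have phiu: "phi u = Ephi (yf (\<lambda>k. Dt k a) (bbv (vv u))) (ttv (vv u))" if "real m \<le> u" "u \<le> real m + 1" for u
      unfolding phi_def using Dfc[OF that] by simp
    have "\<bar>phi x - phi y\<bar> \<le> 2^(L*L) * \<bar>vv x - vv y\<bar>"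
      unfolding phiu[OF x] phiu[OF y]
      using vr[OF x] vr[OF y] Dt_bounds[OF a] by (intro Psi_lip[OF _ \<omega>]) auto
    also have "\<bar>vv x - vv y\<bar> = \<bar>x - y\<bar>"
    proof -
      have "vv x - vv y = sg a * (x - y)" using vvx vvy False by (simp add: algebra_simps)
      then show ?thesis by (simp add: abs_mult sg_def)
    qed
    finally show ?thesis .
qed

lemma phi_interval_nat:
  assumes m: "Suc m < M*M" and x: "real m \<le> x" "x \<le> real m + 1" and y: "real m \<le> y" "y \<le> real m + 1"
  shows "\<bar>phi x - phi y\<bar> \<le> 2^(L*L) * \<bar>x - y\<bar>"
  using phi_interval_A[OF assms] phi_interval_B[OF assms] by blast

lemma phi_lip: "\<bar>phi x - phi y\<bar> \<le> 2^(L*L) * \<bar>x - y\<bar>"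
proof (rule lip_glue)
  fix n :: int and x y :: real
  assume x: "real_of_int n \<le> x" "x \<le> real_of_int n + 1" and y: "real_of_int n \<le> y" "y \<le> real_of_int n + 1"
  show "\<bar>phi x - phi y\<bar> \<le> 2^(L*L) * \<bar>x - y\<bar>"
  proof (cases "n < 0")
    case True
    then have "n \<le> -1" by simp
    then have "real_of_int n \<le> -1" by simp
    then have x0: "x \<le> 0" and y0: "y \<le> 0" using x y by linarith+
    have "phi x = phi 0" using x0 by (rule phi_le0)
    moreover have "phi y = phi 0" using y0 by (rule phi_le0)
    ultimately
    show ?thesis by simp
  next
    case False
    show ?thesis
    proof (cases "n \<ge> int (M*M) - 1")
      case True
      then have "real_of_int (int (M*M) - 1) \<le> real_of_int n" by (simp only: of_int_le_iff)
      then have "real (M*M) - 1 \<le> real_of_int n" by simp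
      then have "real (M*M) - 1 \<le> x" "real (M*M) - 1 \<le> y" using x y by linarith+
      then have "phi x = phi y" by (rule phi_geN)
      then show ?thesis by simp
    next
      case False2: False
      define m where "m = nat n"
      have n0: "0 \<le> n" using False by simp
      have mn: "real m = real_of_int n" using n0 unfolding m_def by simp
      have "int (Suc m) < int (M*M)" using n0 False2 unfolding m_def by simp
      then have "Suc m < M*M" by (simp only: of_nat_less_iff)
      moreover have "real m \<le> x" "x \<le> real m + 1" "real m \<le> y" "y \<le> real m + 1" using x y mn by simp_all
      ultimately show ?thesis by (rule phi_interval_nat)
    qed
  qed
qed

end

lemma sum_block: fixes a b :: nat shows "(\<Sum>j<a+b. f j) = (\<Sum>j<a. f j) + (\<Sum>u<b. f (a+u))"
  by (induction b) (auto simp: add.assoc)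

lemma relu_relu: "c \<ge> 0 \<Longrightarrow> relu (relu x - c) = relu (x - c)"
  unfolding relu_def by auto

lemma relu_idem: "relu (relu x) = relu x"
  unfolding relu_def by auto

lemma relu_pm: "relu a - relu (- a) = a"
  unfolding relu_def by auto

lemma sum_pair: fixes f A B :: "nat \<Rightarrow> real" shows "(\<Sum>u<n. f u * A u) + (\<Sum>u<n. - f u * B u) = (\<Sum>u<n. f u * (A u - B u))"
  unfolding sum.distrib[symmetric] by (rule sum.cong) (auto simp: algebra_simps)

lemma sum_cong_lt: "(\<And>u. u < n \<Longrightarrow> f u = g u) \<Longrightarrow> (\<Sum>u<n. f u) = (\<Sum>u<n. g u)"
  by (rule sum.cong) auto

context cons begin

abbreviation "dA \<equiv> 5 * W + 3"

definition cP :: "nat \<Rightarrow> real" where "cP j = real (j*M)"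
definition cQ :: "nat \<Rightarrow> real" where "cQ j = real ((j+1)*M) - 1"
definition cR :: "nat \<Rightarrow> real" where "cR j = real ((j+1)*M)"

lemma cPQR_nonneg: "0 \<le> cP j" "0 \<le> cQ j" "0 \<le> cR j"
proof -
  show "0 \<le> cP j" "0 \<le> cR j" unfolding cP_def cR_def by simp_all
  have "M \<le> (j+1)*M" by simp
  then have "1 \<le> (j+1)*M" using M1 by linarith
  then have "real (1::nat) \<le> real ((j+1)*M)" by (simp only: of_nat_le_iff)
  then show "0 \<le> cQ j" unfolding cQ_def by simp
qed

definition V :: "nat \<Rightarrow> real \<Rightarrow> real" where
  "V g x = (\<Sum>j<g*W. sg j * (relu (x - cP j) - relu (x - cQ j)))"
definition E :: "nat \<Rightarrow> nat \<Rightarrow> real \<Rightarrow> real" where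
  "E k g x = (\<Sum>j<g*W. cD k j * (relu (x - cQ j) - relu (x - cR j)))"

lemma V_Suc: "V (Suc g) x = V g x + (\<Sum>u<W. sg (g*W+u) * (relu (x - cP (g*W+u)) - relu (x - cQ (g*W+u))))"
proof -
  have e: "Suc g * W = g*W + W" by simp
  show ?thesis unfolding V_def e sum_block ..
qed

lemma E_Suc: "E k (Suc g) x = E k g x + (\<Sum>u<W. cD k (g*W+u) * (relu (x - cQ (g*W+u)) - relu (x - cR (g*W+u))))"
proof -
  have e: "Suc g * W = g*W + W" by simp
  show ?thesis unfolding E_def e sum_block ..
qed

lemma V_L: "V L x = vv x"
  unfolding V_def vv_def snk_def
proof (rule sum.cong)
  show "{..<L*W} = {..<M}" by (simp add: mult.commute)
  fix j assume "j \<in> {..<M}"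
  have eq: "x - real (j*M) - (real M - 1) = x - cQ j" unfolding cQ_def by (simp add: algebra_simps)
  show "sg j * (relu (x - cP j) - relu (x - cQ j)) = sg j * clp (real M - 1) (x - real (j * M))"
    unfolding clp_def eq cP_def ..
qed

lemma E_L: "Dt k 0 + E k L x = Df k x"
  unfolding E_def Df_def stw_def
proof (rule arg_cong[where f="\<lambda>s. Dt k 0 + s"], rule sum.cong)
  show "{..<L*W} = {..<M}" by (simp add: mult.commute)
  fix j assume "j \<in> {..<M}"
  have eq: "x - real ((j+1)*M) + 1 = x - cQ j" unfolding cQ_def by (simp add: algebra_simps)
  show "cD k j * (relu (x - cQ j) - relu (x - cR j)) = cD k j * rmp (x - real ((j+1) * M))"
    unfolding rmp_def eq cR_def ..
qed

definition HA :: "nat \<Rightarrow> real \<Rightarrow> nat \<Rightarrow> real" where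
  "HA g x i = (if i = 0 then relu x
     else if i = 1 then relu (V g x) else if i = 2 then relu (- V g x)
     else if i < 3 + W then relu (E (i-3) g x)
     else if i < 3 + 2*W then relu (- E (i-3-W) g x)
     else if i < 3 + 3*W then relu (x - cP (g*W + (i-3-2*W)))
     else if i < 3 + 4*W then relu (x - cQ (g*W + (i-3-3*W)))
     else if i < 3 + 5*W then relu (x - cR (g*W + (i-3-4*W)))
     else 0)"

lemma HA_slots:
  "HA g x 0 = relu x" "HA g x 1 = relu (V g x)" "HA g x 2 = relu (- V g x)"
  "k < W \<Longrightarrow> HA g x (3 + k) = relu (E k g x)"
  "k < W \<Longrightarrow> HA g x (3 + W + k) = relu (- E k g x)"
  "k < W \<Longrightarrow> HA g x (3 + 2*W + k) = relu (x - cP (g*W + k))"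
  "k < W \<Longrightarrow> HA g x (3 + 3*W + k) = relu (x - cQ (g*W + k))"
  "k < W \<Longrightarrow> HA g x (3 + 4*W + k) = relu (x - cR (g*W + k))"
  unfolding HA_def by auto

definition vrow :: "nat \<Rightarrow> nat \<Rightarrow> real" where
  "vrow g j = pt 1 1 j + pt 2 (-1) j + rg (3+2*W) W (\<lambda>u. sg ((g-1)*W+u)) j + rg (3+3*W) W (\<lambda>u. - sg ((g-1)*W+u)) j"
definition erow :: "nat \<Rightarrow> nat \<Rightarrow> nat \<Rightarrow> real" where
  "erow g k j = pt (3+k) 1 j + pt (3+W+k) (-1) j + rg (3+3*W) W (\<lambda>u. cD k ((g-1)*W+u)) j + rg (3+4*W) W (\<lambda>u. - cD k ((g-1)*W+u)) j"

lemma ev_vrow: assumes "1 \<le> g" shows "ev dA (vrow g) (HA (g-1) x) = V g x"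
proof -
  obtain g' where g: "g = Suc g'" using assms by (cases g) auto
  have "ev dA (vrow g) (HA (g-1) x) = HA g' x 1 - HA g' x 2
      + (\<Sum>u<W. sg (g'*W+u) * HA g' x (3 + 2*W + u)) + (\<Sum>u<W. - sg (g'*W+u) * HA g' x (3 + 3*W + u))"
    unfolding vrow_def g by (simp add: ev_add ev_pt ev_rg)
  also have "\<dots> = relu (V g' x) - relu (- V g' x)
      + (\<Sum>u<W. sg (g'*W+u) * relu (x - cP (g'*W+u))) + (\<Sum>u<W. - sg (g'*W+u) * relu (x - cQ (g'*W+u)))"
  proof -
    have "(\<Sum>u<W. sg (g'*W+u) * HA g' x (3 + 2*W + u)) = (\<Sum>u<W. sg (g'*W+u) * relu (x - cP (g'*W+u)))"
      by (rule sum_cong_lt) (simp only: HA_slots)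
    moreover have "(\<Sum>u<W. - sg (g'*W+u) * HA g' x (3 + 3*W + u)) = (\<Sum>u<W. - sg (g'*W+u) * relu (x - cQ (g'*W+u)))"
      by (rule sum_cong_lt) (simp only: HA_slots)
    ultimately show ?thesis by (simp only: HA_slots)
  qed
  also have "\<dots> = V g' x + (\<Sum>u<W. sg (g'*W+u) * (relu (x - cP (g'*W+u)) - relu (x - cQ (g'*W+u))))"
    by (simp only: relu_pm add.assoc sum_pair)
  also have "\<dots> = V g x" unfolding g V_Suc ..
  finally show ?thesis .
qed

lemma ev_erow: assumes "1 \<le> g" "k < W" shows "ev dA (erow g k) (HA (g-1) x) = E k g x"
proof -
  obtain g' where g: "g = Suc g'" using assms by (cases g) auto
  have "ev dA (erow g k) (HA (g-1) x) = HA g' x (3+k) - HA g' x (3+W+k)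
      + (\<Sum>u<W. cD k (g'*W+u) * HA g' x (3 + 3*W + u)) + (\<Sum>u<W. - cD k (g'*W+u) * HA g' x (3 + 4*W + u))"
    unfolding erow_def g using assms(2) by (simp add: ev_add ev_pt ev_rg)
  also have "\<dots> = relu (E k g' x) - relu (- E k g' x)
      + (\<Sum>u<W. cD k (g'*W+u) * relu (x - cQ (g'*W+u))) + (\<Sum>u<W. - cD k (g'*W+u) * relu (x - cR (g'*W+u)))"
  proof -
    have "(\<Sum>u<W. cD k (g'*W+u) * HA g' x (3 + 3*W + u)) = (\<Sum>u<W. cD k (g'*W+u) * relu (x - cQ (g'*W+u)))"
      by (rule sum_cong_lt) (simp only: HA_slots)
    moreover have "(\<Sum>u<W. - cD k (g'*W+u) * HA g' x (3 + 4*W + u)) = (\<Sum>u<W. - cD k (g'*W+u) * relu (x - cR (g'*W+u)))"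
      by (rule sum_cong_lt) (simp only: HA_slots)
    ultimately show ?thesis using assms(2) by (simp only: HA_slots)
  qed
  also have "\<dots> = E k g' x + (\<Sum>u<W. cD k (g'*W+u) * (relu (x - cQ (g'*W+u)) - relu (x - cR (g'*W+u))))"
    by (simp only: relu_pm add.assoc sum_pair)
  also have "\<dots> = E k g x" unfolding g E_Suc ..
  finally show ?thesis .
qed


lemma idxA_cases:
  assumes "i < dA"
  obtains "i = 0" | "i = 1" | "i = 2" | k where "k < W" "i = 3 + k" | k where "k < W" "i = 3 + W + k"
    | k where "k < W" "i = 3 + 2*W + k" | k where "k < W" "i = 3 + 3*W + k" | k where "k < W" "i = 3 + 4*W + k"
proof -
  have "i = 0 \<or> i = 1 \<or> i = 2 \<or> (\<exists>k<W. i = 3 + k) \<or> (\<exists>k<W. i = 3 + W + k) \<or> (\<exists>k<W. i = 3 + 2*W + k)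
     \<or> (\<exists>k<W. i = 3 + 3*W + k) \<or> (\<exists>k<W. i = 3 + 4*W + k)" using assms by presburger
  then show ?thesis using that by blast
qed

definition AA :: "nat \<Rightarrow> nat \<Rightarrow> nat \<Rightarrow> real" where
  "AA g i = (if i = 0 then pt 0 1 else if i = 1 then vrow g else if i = 2 then (\<lambda>j. - vrow g j)
     else if i < 3 + W then erow g (i-3) else if i < 3 + 2*W then (\<lambda>j. - erow g (i-3-W) j) else pt 0 1)"
definition bA :: "nat \<Rightarrow> nat \<Rightarrow> real" where
  "bA g i = (if i < 3 + 2*W then 0 else if i < 3 + 3*W then - cP (g*W + (i-3-2*W))
     else if i < 3 + 4*W then - cQ (g*W + (i-3-3*W)) else - cR (g*W + (i-3-4*W)))"

lemma HA_out: "\<not> i < dA \<Longrightarrow> HA g x i = 0" unfolding HA_def by auto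

lemma relu_vec_aff_out: "\<not> i < n \<Longrightarrow> relu_vec (aff_map A b m n h) i = 0"
  unfolding relu_vec_def aff_map_def relu_def by simp

lemma relu_vec_aff_in: "i < n \<Longrightarrow> relu_vec (aff_map A b m n h) i = relu (ev m (A i) h + b i)"
  unfolding relu_vec_def aff_map_ev by simp

lemma HA_slot1: "HA g x (Suc 0) = relu (V g x)" unfolding HA_def by simp

lemma ACC_step':
  shows "relu_vec (aff_map (AA (Suc g')) (bA (Suc g')) dA dA (HA g' x)) = HA (Suc g') x"
proof -
  have ev1: "ev dA (vrow (Suc g')) (HA g' x) = V (Suc g') x" using ev_vrow[of "Suc g'"] by simp
  have ev2: "k < W \<Longrightarrow> ev dA (erow (Suc g') k) (HA g' x) = E k (Suc g') x" for k using ev_erow[of "Suc g'"] by simp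
  let ?g = "Suc g'"
  show ?thesis
proof
  fix i
  show "relu_vec (aff_map (AA ?g) (bA ?g) dA dA (HA g' x)) i = HA ?g x i"
  proof (cases "i < dA")
    case False then show ?thesis by (simp add: relu_vec_aff_out HA_out)
  next
    case True
    have P0: "ev dA (pt 0 1) (HA g' x) = relu x" for g' by (simp add: ev_pt HA_slots)
    show ?thesis
    proof (cases rule: idxA_cases[OF True])
      case 1 then show ?thesis by (simp add: relu_vec_aff_in AA_def bA_def P0 HA_slots relu_idem)
    next
      case 2 then show ?thesis by (simp add: relu_vec_aff_in AA_def bA_def ev1 HA_slots HA_slot1)
    next
      case 3 then show ?thesis by (simp add: relu_vec_aff_in AA_def bA_def ev_neg ev1 HA_slots)
    next
      case (4 k) then show ?thesis by (simp add: relu_vec_aff_in AA_def bA_def ev2 HA_slots)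
    next
      case (5 k) then show ?thesis by (simp add: relu_vec_aff_in AA_def bA_def ev_neg ev2 HA_slots)
    next
      case (6 k) then show ?thesis by (simp add: relu_vec_aff_in AA_def bA_def P0 HA_slots relu_relu cPQR_nonneg)
    next
      case (7 k) then show ?thesis by (simp add: relu_vec_aff_in AA_def bA_def P0 HA_slots relu_relu cPQR_nonneg)
    next
      case (8 k) then show ?thesis by (simp add: relu_vec_aff_in AA_def bA_def P0 HA_slots relu_relu cPQR_nonneg)
    qed
  qed
qed
qed

lemma ACC_step: assumes "1 \<le> g" shows "relu_vec (aff_map (AA g) (bA g) dA dA (HA (g-1) x)) = HA g x"
  using ACC_step'[of "g-1" x] assms by simp

lemma ACC_first:
  shows "relu_vec (aff_map (AA 0) (bA 0) 1 dA (\<lambda>_. x)) = HA 0 x"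
proof
  fix i
  show "relu_vec (aff_map (AA 0) (bA 0) 1 dA (\<lambda>_. x)) i = HA 0 x i"
  proof (cases "i < dA")
    case False then show ?thesis by (simp add: relu_vec_aff_out HA_out)
  next
    case True
    have V0: "V 0 x = 0" "E k 0 x = 0" for k unfolding V_def E_def by simp_all
    have r0: "relu 0 = 0" unfolding relu_def by simp
    show ?thesis
    proof (cases rule: idxA_cases[OF True])
      case 1 then show ?thesis by (simp add: relu_vec_aff_in AA_def bA_def ev_one pt_def HA_slots)
    next
      case 2 then show ?thesis by (simp add: relu_vec_aff_in AA_def bA_def ev_one pt_def rg_def vrow_def HA_def V0 r0)
    next
      case 3 then show ?thesis by (simp add: relu_vec_aff_in AA_def bA_def ev_one pt_def rg_def vrow_def HA_slots V0 r0)
    next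
      case (4 k) then show ?thesis by (simp add: relu_vec_aff_in AA_def bA_def ev_one pt_def rg_def erow_def HA_slots V0 r0)
    next
      case (5 k) then show ?thesis by (simp add: relu_vec_aff_in AA_def bA_def ev_one pt_def rg_def erow_def HA_slots V0 r0)
    next
      case (6 k) then show ?thesis by (simp add: relu_vec_aff_in AA_def bA_def ev_one pt_def HA_slots)
    next
      case (7 k) then show ?thesis by (simp add: relu_vec_aff_in AA_def bA_def ev_one pt_def HA_slots)
    next
      case (8 k) then show ?thesis by (simp add: relu_vec_aff_in AA_def bA_def ev_one pt_def HA_slots)
    qed
  qed
qed


definition cP2 :: "nat \<Rightarrow> real" where "cP2 i = real (i*L)"
definition cQ2 :: "nat \<Rightarrow> real" where "cQ2 i = real ((i+1)*L) - 1"
definition cR2 :: "nat \<Rightarrow> real" where "cR2 i = real ((i+1)*L)"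

definition HB :: "real \<Rightarrow> nat \<Rightarrow> real" where
  "HB x i = (if i < W then relu (Df i x) else if i < 2*W then relu (- Df (i-W) x)
     else if i < 3*W then relu (vv x - cP2 (i-2*W)) else if i < 4*W then relu (vv x - cQ2 (i-3*W))
     else if i < 5*W then relu (vv x - cR2 (i-4*W)) else 0)"

lemma HB_slots:
  "k < W \<Longrightarrow> HB x k = relu (Df k x)"
  "k < W \<Longrightarrow> HB x (W + k) = relu (- Df k x)"
  "k < W \<Longrightarrow> HB x (2*W + k) = relu (vv x - cP2 k)"
  "k < W \<Longrightarrow> HB x (3*W + k) = relu (vv x - cQ2 k)"
  "k < W \<Longrightarrow> HB x (4*W + k) = relu (vv x - cR2 k)"
  unfolding HB_def by auto

definition AB :: "nat \<Rightarrow> nat \<Rightarrow> real" where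
  "AB i = (if i < W then erow L i else if i < 2*W then (\<lambda>j. - erow L (i-W) j) else vrow L)"
definition bB :: "nat \<Rightarrow> real" where
  "bB i = (if i < W then Dt i 0 else if i < 2*W then - Dt (i-W) 0 else if i < 3*W then - cP2 (i-2*W)
     else if i < 4*W then - cQ2 (i-3*W) else - cR2 (i-4*W))"

lemma idxB_cases:
  assumes "i < 5*W"
  obtains k where "k < W" "i = k" | k where "k < W" "i = W + k" | k where "k < W" "i = 2*W + k"
    | k where "k < W" "i = 3*W + k" | k where "k < W" "i = 4*W + k"
proof -
  have "(\<exists>k<W. i = k) \<or> (\<exists>k<W. i = W + k) \<or> (\<exists>k<W. i = 2*W + k)
     \<or> (\<exists>k<W. i = 3*W + k) \<or> (\<exists>k<W. i = 4*W + k)" using assms by presburger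
  then show ?thesis using that by blast
qed

lemma BT_step: "relu_vec (aff_map AB bB dA (5*W) (HA (L-1) x)) = HB x"
proof -
  have L: "1 \<le> L" using L1 .
  have ev1: "ev dA (vrow L) (HA (L - Suc 0) x) = vv x" using ev_vrow[OF L] V_L by simp
  have ev2: "Dt k 0 + ev dA (erow L k) (HA (L-1) x) = Df k x" if "k < W" for k
    using ev_erow[OF L that] E_L by simp
  have ev3: "- Dt k 0 + - ev dA (erow L k) (HA (L-1) x) = - Df k x" if "k < W" for k
    using ev2[OF that] by simp
  show ?thesis
  proof
    fix i
    show "relu_vec (aff_map AB bB dA (5*W) (HA (L-1) x)) i = HB x i"
    proof (cases "i < 5*W")
      case False then show ?thesis by (simp add: relu_vec_aff_out HB_def)
    next
      case True
      show ?thesis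
      proof (cases rule: idxB_cases[OF True])
        case (1 k) then show ?thesis using ev2[OF 1(1)] by (simp add: relu_vec_aff_in AB_def bB_def HB_slots add.commute)
      next
        case (2 k)
        have e: "ev dA (AB i) (HA (L-1) x) = - ev dA (erow L k) (HA (L-1) x)" "bB i = - Dt k 0"
          using 2 by (simp_all add: AB_def bB_def ev_neg)
        have pre: "ev dA (AB i) (HA (L-1) x) + bB i = - Df k x" using e ev2[OF 2(1)] by linarith
        show ?thesis unfolding relu_vec_aff_in[OF True] pre using 2 by (simp add: HB_slots)
      next
        case (3 k) then show ?thesis by (simp add: relu_vec_aff_in AB_def bB_def HB_slots ev1)
      next
        case (4 k) then show ?thesis by (simp add: relu_vec_aff_in AB_def bB_def HB_slots ev1)
      next
        case (5 k) then show ?thesis by (simp add: relu_vec_aff_in AB_def bB_def HB_slots ev1)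
      qed
    qed
  qed
qed

definition brow :: "nat \<Rightarrow> real" where
  "brow j = rg (3*W) W (\<lambda>_. 1) j + rg (4*W) W (\<lambda>_. -1) j"
definition trow :: "nat \<Rightarrow> real" where
  "trow j = rg (2*W) W sg j + rg (3*W) W (\<lambda>u. - sg u) j"
definition drow :: "nat \<Rightarrow> nat \<Rightarrow> real" where
  "drow k j = pt k 1 j + pt (W+k) (-1) j"

lemma ev_brow: "ev (5*W) brow (HB x) = bbv (vv x)"
proof -
  have "ev (5*W) brow (HB x) = (\<Sum>u<W. 1 * HB x (3*W + u)) + (\<Sum>u<W. - 1 * HB x (4*W + u))"
    unfolding brow_def by (simp add: ev_add ev_rg)
  also have "\<dots> = (\<Sum>u<W. 1 * relu (vv x - cQ2 u)) + (\<Sum>u<W. - 1 * relu (vv x - cR2 u))"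
  proof -
    have "(\<Sum>u<W. 1 * HB x (3*W + u)) = (\<Sum>u<W. 1 * relu (vv x - cQ2 u))"
      by (rule sum_cong_lt) (simp only: HB_slots)
    moreover have "(\<Sum>u<W. - 1 * HB x (4*W + u)) = (\<Sum>u<W. - 1 * relu (vv x - cR2 u))"
      by (rule sum_cong_lt) (simp only: HB_slots)
    ultimately show ?thesis by simp
  qed
  also have "\<dots> = (\<Sum>u<W. 1 * (relu (vv x - cQ2 u) - relu (vv x - cR2 u)))" by (rule sum_pair)
  also have "\<dots> = bbv (vv x)" unfolding bbv_def stw_def
  proof (rule sum.cong[OF refl])
    fix j
    have eq: "vv x - real ((j+1)*L) + 1 = vv x - cQ2 j" unfolding cQ2_def by (simp add: algebra_simps)
    show "1 * (relu (vv x - cQ2 j) - relu (vv x - cR2 j)) = 1 * rmp (vv x - real ((j+1) * L))"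
      unfolding rmp_def eq cR2_def ..
  qed
  finally show ?thesis .
qed

lemma ev_trow: "ev (5*W) trow (HB x) = ttv (vv x)"
proof -
  have "ev (5*W) trow (HB x) = (\<Sum>u<W. sg u * HB x (2*W + u)) + (\<Sum>u<W. - sg u * HB x (3*W + u))"
    unfolding trow_def by (simp add: ev_add ev_rg)
  also have "\<dots> = (\<Sum>u<W. sg u * relu (vv x - cP2 u)) + (\<Sum>u<W. - sg u * relu (vv x - cQ2 u))"
  proof -
    have "(\<Sum>u<W. sg u * HB x (2*W + u)) = (\<Sum>u<W. sg u * relu (vv x - cP2 u))"
      by (rule sum_cong_lt) (simp only: HB_slots)
    moreover have "(\<Sum>u<W. - sg u * HB x (3*W + u)) = (\<Sum>u<W. - sg u * relu (vv x - cQ2 u))"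
      by (rule sum_cong_lt) (simp only: HB_slots)
    ultimately show ?thesis by simp
  qed
  also have "\<dots> = (\<Sum>u<W. sg u * (relu (vv x - cP2 u) - relu (vv x - cQ2 u)))" by (rule sum_pair)
  also have "\<dots> = ttv (vv x)" unfolding ttv_def snk_def
  proof (rule sum.cong[OF refl])
    fix j
    have eq: "vv x - real (j*L) - (real L - 1) = vv x - cQ2 j" unfolding cQ2_def by (simp add: algebra_simps)
    show "sg j * (relu (vv x - cP2 j) - relu (vv x - cQ2 j)) = sg j * clp (real L - 1) (vv x - real (j * L))"
      unfolding clp_def eq cP2_def ..
  qed
  finally show ?thesis .
qed

lemma ev_drow: "k < W \<Longrightarrow> ev (5*W) (drow k) (HB x) = Df k x"
  unfolding drow_def by (simp add: ev_add ev_pt HB_slots relu_pm)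

definition HM :: "real \<Rightarrow> nat \<Rightarrow> real" where
  "HM x i = (if i = 0 then relu (ttv (vv x)) else if i = 1 then relu (- ttv (vv x))
     else if i < 2 + W then relu (Df (i-2) x + 2 * (bbv (vv x) - real (i-2)))
     else if i < 2 + 2*W then relu (bbv (vv x) - real (i-2-W)) else 0)"

lemma HM_slots:
  "HM x 0 = relu (ttv (vv x))" "HM x 1 = relu (- ttv (vv x))"
  "k < W \<Longrightarrow> HM x (2 + k) = relu (Df k x + 2 * (bbv (vv x) - real k))"
  "k < W \<Longrightarrow> HM x (2 + W + k) = relu (bbv (vv x) - real k)"
  unfolding HM_def by auto

definition AM :: "nat \<Rightarrow> nat \<Rightarrow> real" where
  "AM i = (if i = 0 then trow else if i = 1 then (\<lambda>j. - trow j)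
     else if i < 2 + W then (\<lambda>j. drow (i-2) j + 2 * brow j) else brow)"
definition bM :: "nat \<Rightarrow> real" where
  "bM i = (if i < 2 then 0 else if i < 2 + W then - 2 * real (i-2) else - real (i-2-W))"

lemma idxM_cases:
  assumes "i < 2*W+2"
  obtains "i = 0" | "i = 1" | k where "k < W" "i = 2 + k" | k where "k < W" "i = 2 + W + k"
proof -
  have "i = 0 \<or> i = 1 \<or> (\<exists>k<W. i = 2 + k) \<or> (\<exists>k<W. i = 2 + W + k)" using assms by presburger
  then show ?thesis using that by blast
qed

lemma MUX_step: "relu_vec (aff_map AM bM (5*W) (2*W+2) (HB x)) = HM x"
proof
  fix i
  show "relu_vec (aff_map AM bM (5*W) (2*W+2) (HB x)) i = HM x i"
  proof (cases "i < 2*W+2")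
    case False then show ?thesis by (simp add: relu_vec_aff_out HM_def)
  next
    case True
    show ?thesis
    proof (cases rule: idxM_cases[OF True])
      case 1 then show ?thesis by (simp add: relu_vec_aff_in AM_def bM_def HM_slots ev_trow)
    next
      case 2 then show ?thesis by (simp add: relu_vec_aff_in AM_def bM_def HM_def ev_trow ev_neg)
    next
      case (3 k)
      have pre: "ev (5*W) (AM i) (HB x) + bM i = Df k x + 2 * (bbv (vv x) - real k)"
        using 3 by (simp add: AM_def bM_def ev_add ev_scale ev_drow ev_brow right_diff_distrib)
      show ?thesis unfolding relu_vec_aff_in[OF True] pre using 3 by (simp add: HM_def)
    next
      case (4 k) then show ?thesis by (simp add: relu_vec_aff_in AM_def bM_def HM_def ev_brow)
    qed
  qed
qed


definition yv :: "real \<Rightarrow> real" where "yv x = yf (\<lambda>k. Df k x) (bbv (vv x))"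
definition tv :: "real \<Rightarrow> real" where "tv x = ttv (vv x)"
definition acc :: "nat \<Rightarrow> real \<Rightarrow> real" where "acc e x = (\<Sum>i<e-1. sel i (yv x) (tv x))"
definition Sv :: "nat \<Rightarrow> real \<Rightarrow> real" where "Sv e x = (if e = 0 then 0 else sel (e-1) (yv x) (tv x))"

definition HE :: "nat \<Rightarrow> real \<Rightarrow> nat \<Rightarrow> real" where
  "HE e x i = (if i = 0 then relu (tv x) else if i = 1 then relu (- tv x)
     else if i = 2 then relu (zz e (yv x)) else if i = 3 then relu (- zz e (yv x))
     else if i = 4 then relu (acc e x) else if i = 5 then relu (- acc e x)
     else if i = 6 then relu (Kf e * (zz e (yv x) - 1/2) + 1/2)
     else if i = 7 then relu (Kf e * (zz e (yv x) - 1/2) - 1/2)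
     else if i = 8 then relu (tv x - real e) else if i = 9 then relu (real e - tv x)
     else if i = 10 then Sv e x else 0)"

definition yrow :: "nat \<Rightarrow> real" where
  "yrow j = rg 2 W (\<lambda>_. 1) j + rg (2+W) W (\<lambda>_. -2) j + pt (2+W) (-1) j"
definition t0row :: "nat \<Rightarrow> real" where "t0row j = pt 0 1 j + pt 1 (-1) j"
definition zrow :: "nat \<Rightarrow> real" where "zrow j = pt 2 2 j + pt 3 (-2) j + pt 6 (-1) j + pt 7 1 j"
definition arow :: "nat \<Rightarrow> real" where "arow j = pt 4 1 j + pt 5 (-1) j + pt 10 1 j"
definition srow :: "nat \<Rightarrow> real" where "srow j = pt 6 1 j + pt 7 (-1) j + pt 8 (-1) j + pt 9 (-1) j"

lemma ev_t0row: "2 \<le> d \<Longrightarrow> ev d t0row h = h 0 - h 1"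
  unfolding t0row_def by (simp add: ev_add ev_pt)

lemma ev_yrow: "ev (2*W+2) yrow (HM x) = yv x + 1"
proof -
  have "ev (2*W+2) yrow (HM x) = (\<Sum>u<W. 1 * HM x (2 + u)) + (\<Sum>u<W. -2 * HM x (2 + W + u)) + - HM x (2 + W)"
    unfolding yrow_def using W1 by (simp add: ev_add ev_rg ev_pt)
  also have "\<dots> = (\<Sum>u<W. 1 * relu (Df u x + 2 * (bbv (vv x) - real u))) + (\<Sum>u<W. -2 * relu (bbv (vv x) - real u)) + - relu (bbv (vv x))"
  proof -
    have "(\<Sum>u<W. 1 * HM x (2 + u)) = (\<Sum>u<W. 1 * relu (Df u x + 2 * (bbv (vv x) - real u)))"
      by (rule sum_cong_lt) (simp only: HM_slots)
    moreover have "(\<Sum>u<W. -2 * HM x (2 + W + u)) = (\<Sum>u<W. -2 * relu (bbv (vv x) - real u))"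
      by (rule sum_cong_lt) (simp only: HM_slots)
    moreover have "HM x (2 + W) = relu (bbv (vv x))" unfolding HM_def using W1 by simp
    ultimately show ?thesis by simp
  qed
  also have "\<dots> = yv x + 1" unfolding yv_def yf_def by (simp add: sum_negf sum_distrib_left)
  finally show ?thesis .
qed

definition AZ0 :: "nat \<Rightarrow> nat \<Rightarrow> real" where
  "AZ0 i = (if i = 0 then t0row else if i = 1 then (\<lambda>j. - t0row j) else if i = 2 then yrow
     else if i = 3 then (\<lambda>j. - yrow j) else if i = 6 \<or> i = 7 then (\<lambda>j. Kf 0 * yrow j)
     else if i = 8 then t0row else if i = 9 then (\<lambda>j. - t0row j) else (\<lambda>j. 0))"
definition bZ0 :: "nat \<Rightarrow> real" where
  "bZ0 i = (if i = 2 then -1 else if i = 3 then 1 else if i = 6 then - Kf 0 * (3/2) + 1/2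
     else if i = 7 then - Kf 0 * (3/2) - 1/2 else 0)"

lemma idx11: "(i::nat) < 11 \<Longrightarrow> i = 0 \<or> i = 1 \<or> i = 2 \<or> i = 3 \<or> i = 4 \<or> i = 5 \<or> i = 6 \<or> i = 7 \<or> i = 8 \<or> i = 9 \<or> i = 10"
  by arith

lemma EXT0_step: "relu_vec (aff_map AZ0 bZ0 (2*W+2) 11 (HM x)) = HE 0 x"
proof
  fix i
  have t: "ev (Suc (Suc (2*W))) t0row (HM x) = tv x" using W1 by (simp add: ev_t0row HM_def tv_def relu_pm)
  have y: "ev (Suc (Suc (2*W))) yrow (HM x) = yv x + 1" using ev_yrow by simp
  have r0: "relu 0 = 0" by (simp add: relu_def)
  have a0: "acc 0 x = 0" "Sv 0 x = 0" by (simp_all add: acc_def Sv_def)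
  show "relu_vec (aff_map AZ0 bZ0 (2*W+2) 11 (HM x)) i = HE 0 x i"
  proof (cases "i < 11")
    case False then show ?thesis by (simp add: relu_vec_aff_out HE_def)
  next
    case True
    have pre: "ev (2*W+2) (AZ0 i) (HM x) + bZ0 i =
      (if i = 0 then tv x else if i = 1 then - tv x else if i = 2 then yv x else if i = 3 then - yv x
       else if i = 6 then Kf 0 * (yv x - 1/2) + 1/2 else if i = 7 then Kf 0 * (yv x - 1/2) - 1/2
       else if i = 8 then tv x else if i = 9 then - tv x else 0)"
      using idx11[OF True] by (auto simp: AZ0_def bZ0_def ev_neg ev_scale ev_zero t y; simp add: algebra_simps)
    show ?thesis unfolding relu_vec_aff_in[OF True] pre
      using idx11[OF True] by (auto simp: HE_def r0 a0)
  qed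
qed

definition AZ :: "nat \<Rightarrow> nat \<Rightarrow> nat \<Rightarrow> real" where
  "AZ e i = (if i = 0 then t0row else if i = 1 then (\<lambda>j. - t0row j) else if i = 2 then zrow
     else if i = 3 then (\<lambda>j. - zrow j) else if i = 4 then arow else if i = 5 then (\<lambda>j. - arow j)
     else if i = 6 \<or> i = 7 then (\<lambda>j. Kf e * zrow j)
     else if i = 8 then t0row else if i = 9 then (\<lambda>j. - t0row j) else if i = 10 then srow else (\<lambda>j. 0))"
definition bZ :: "nat \<Rightarrow> nat \<Rightarrow> real" where
  "bZ e i = (if i = 6 then - Kf e / 2 + 1/2 else if i = 7 then - Kf e / 2 - 1/2
     else if i = 8 then - real e else if i = 9 then real e else 0)"

lemma acc_Suc: "acc (Suc e) x = acc e x + Sv e x"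
  unfolding acc_def Sv_def by (cases e) auto

lemma EXT_step: "relu_vec (aff_map (AZ (Suc e)) (bZ (Suc e)) 11 11 (HE e x)) = HE (Suc e) x"
proof
  fix i
  have t: "ev 11 t0row (HE e x) = tv x" by (simp add: ev_t0row HE_def relu_pm)
  have z: "ev 11 zrow (HE e x) = zz (Suc e) (yv x)"
  proof -
    have "ev 11 zrow (HE e x) = 2 * relu (zz e (yv x)) + -2 * relu (- zz e (yv x))
       + - 1 * relu (Kf e * (zz e (yv x) - 1/2) + 1/2) + 1 * relu (Kf e * (zz e (yv x) - 1/2) - 1/2)"
      unfolding zrow_def by (simp add: ev_add ev_pt HE_def)
    then show ?thesis unfolding st_def zz.simps using relu_pm[of "zz e (yv x)"] by linarith
  qed
  have a: "ev 11 arow (HE e x) = acc (Suc e) x"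
    unfolding arow_def by (simp add: ev_add ev_pt HE_def relu_pm acc_Suc)
  have sr: "relu (ev 11 srow (HE e x)) = Sv (Suc e) x"
  proof -
    have "ev 11 srow (HE e x) = 1 * relu (Kf e * (zz e (yv x) - 1/2) + 1/2) + - 1 * relu (Kf e * (zz e (yv x) - 1/2) - 1/2)
       + - 1 * relu (tv x - real e) + - 1 * relu (real e - tv x)"
      unfolding srow_def by (simp add: ev_add ev_pt HE_def)
    then have "ev 11 srow (HE e x) = st e (zz e (yv x)) - (relu (tv x - real e) + relu (real e - tv x))"
      unfolding st_def by linarith
    then show ?thesis unfolding Sv_def sel_def by simp
  qed
  have r0: "relu 0 = 0" by (simp add: relu_def)
  show "relu_vec (aff_map (AZ (Suc e)) (bZ (Suc e)) 11 11 (HE e x)) i = HE (Suc e) x i"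
  proof (cases "i < 11")
    case False then show ?thesis by (simp add: relu_vec_aff_out HE_def)
  next
    case True
    have pre: "i \<noteq> 10 \<Longrightarrow> ev 11 (AZ (Suc e) i) (HE e x) + bZ (Suc e) i =
      (if i = 0 then tv x else if i = 1 then - tv x else if i = 2 then zz (Suc e) (yv x)
       else if i = 3 then - zz (Suc e) (yv x) else if i = 4 then acc (Suc e) x else if i = 5 then - acc (Suc e) x
       else if i = 6 then Kf (Suc e) * (zz (Suc e) (yv x) - 1/2) + 1/2
       else if i = 7 then Kf (Suc e) * (zz (Suc e) (yv x) - 1/2) - 1/2
       else if i = 8 then tv x - real (Suc e) else if i = 9 then real (Suc e) - tv x else 0)"
      using idx11[OF True] by (auto simp: AZ_def bZ_def ev_neg ev_scale ev_zero t z a; simp add: algebra_simps)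
    show ?thesis
    proof (cases "i = 10")
      case True
      then show ?thesis by (simp add: relu_vec_aff_in AZ_def bZ_def sr HE_def)
    next
      case False
      show ?thesis unfolding relu_vec_aff_in[OF \<open>i < 11\<close>] pre[OF False]
        using idx11[OF \<open>i < 11\<close>] False by (auto simp: HE_def)
    qed
  qed
qed

lemma OUT_eq: "aff_map (\<lambda>_. arow) (\<lambda>_. 0) 11 1 (HE L x) 0 = phi x"
proof -
  have "aff_map (\<lambda>_. arow) (\<lambda>_. 0) 11 1 (HE L x) 0 = acc L x + Sv L x"
    unfolding aff_map_ev arow_def by (simp add: ev_add ev_pt HE_def relu_pm)
  also have "\<dots> = (\<Sum>i<L. sel i (yv x) (tv x))"
  proof -
    obtain L' where L': "L = Suc L'" using L1 by (cases L) auto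
    show ?thesis unfolding acc_def Sv_def using L' by simp
  qed
  also have "\<dots> = phi x" unfolding phi_def Ephi_def yv_def tv_def ..
  finally show ?thesis .
qed


lemma phi_NN: assumes L2: "2 \<le> L" shows "phi \<in> NN (8*W+4) (4*L)"
proof -
  define Wd where "Wd = 8*W+4"
  have dA: "dA \<le> Wd" unfolding Wd_def by simp
  have h0: "hid Wd 1 dA (HA 0)"
    by (rule hid_first[OF dA, where A="AA 0" and b="bA 0"]) (rule ACC_first[symmetric])
  have hg: "hid Wd (Suc g) dA (HA g)" for g
  proof (induction g)
    case 0 then show ?case using h0 by simp
  next
    case (Suc g)
    show ?case by (rule hid_step[OF Suc dA, where A="AA (Suc g)" and b="bA (Suc g)"]) (simp add: ACC_step')
  qed
  obtain L' where L': "L = Suc L'" using L1 by (cases L) auto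
  have hL: "hid Wd L dA (HA (L-1))" using hg[of L'] L' by simp
  have hB: "hid Wd (Suc L) (5*W) HB"
    by (rule hid_step[OF hL, where A="AB" and b="bB"]) (simp add: Wd_def, rule BT_step[symmetric])
  have hM: "hid Wd (Suc (Suc L)) (2*W+2) HM"
    by (rule hid_step[OF hB, where A="AM" and b="bM"]) (simp add: Wd_def, rule MUX_step[symmetric])
  have hE0: "hid Wd (Suc (Suc (Suc L))) 11 (HE 0)"
    by (rule hid_step[OF hM, where A="AZ0" and b="bZ0"]) (use W1 in \<open>simp add: Wd_def\<close>, rule EXT0_step[symmetric])
  have hE: "hid Wd (Suc (Suc (Suc L)) + e) 11 (HE e)" for e
  proof (induction e)
    case 0 then show ?case using hE0 by simp
  next
    case (Suc e)
    have "hid Wd (Suc (Suc (Suc (Suc L)) + e)) 11 (HE (Suc e))"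
      by (rule hid_step[OF Suc, where A="AZ (Suc e)" and b="bZ (Suc e)"]) (use W1 in \<open>simp add: Wd_def\<close>, rule EXT_step[symmetric])
    then show ?case by simp
  qed
  have "phi \<in> NN Wd (4*L)"
    by (rule hid_out[OF hE[of L], where A="\<lambda>_. arow" and b="\<lambda>_. 0"]) (use L2 in simp, rule OUT_eq[symmetric])
  then show ?thesis unfolding Wd_def .
qed

end

theorem lemma30:
  fixes W L :: nat and \<theta> :: "nat \<Rightarrow> real"
  assumes "W \<ge> 6" and "L \<ge> 2"
    and "\<forall>i < W^2 * L^2. \<theta> i \<in> {0, 1}"
  shows "\<exists>\<phi> \<in> NN (8 * W + 4) (4 * L).
           (\<forall>i < W^2 * L^2. \<phi> (real i) = \<theta> i) \<and>
           (2 * 2 ^ (L^2) + real (L^2))-lipschitz_on UNIV \<phi>"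
proof -
  have sq: "W^2 * L^2 = (W*L)*(W*L)" by (simp add: power2_eq_square algebra_simps)
  interpret c: cons W L \<theta>
    by unfold_locales (use assms in \<open>auto simp: sq\<close>)
  show ?thesis
  proof (rule bexI[of _ c.phi], intro conjI allI impI)
    show "c.phi \<in> NN (8 * W + 4) (4 * L)" by (rule c.phi_NN[OF assms(2)])
    fix i assume "i < W^2 * L^2"
    then show "c.phi (real i) = \<theta> i" using c.phi_int sq by simp
  next
    show "(2 * 2 ^ (L^2) + real (L^2))-lipschitz_on UNIV c.phi"
    proof (rule lipschitz_onI)
      fix x y :: real
      have "dist (c.phi x) (c.phi y) \<le> 2^(L*L) * dist x y"
        using c.phi_lip[of x y] by (simp add: dist_real_def)
      also have "\<dots> \<le> (2 * 2 ^ (L^2) + real (L^2)) * dist x y"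
        by (intro mult_right_mono) (auto simp: power2_eq_square)
      finally show "dist (c.phi x) (c.phi y) \<le> (2 * 2 ^ (L^2) + real (L^2)) * dist x y" .
    qed simp
  qed
qed

end
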